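(* Let $s\in\mathbb{N}$ and $p,q\in[1,\infty]$, and assume $\alpha\ge 1/p$ if $q=1$ and $\alpha>1/p$ if $q>1$. Let $m\ge 1$, let $P$ be a $(t,m,s)$-net in base $b$, and put $N:=|P|=b^m$. Then there exists a constant $C$, independent of $N$, such that $$e^{\mathrm{wor}}(Q_P,\mathcal{H}_{\mathrm{wav},\alpha,s,p,q})\le C\,N^{-\alpha}\ln(N)^{\frac{s-1}{q'}},$$ where $1/q+1/q'=1$. In particular, for $q=1$, $$e^{\mathrm{wor}}(Q_P,\mathcal{H}_{\mathrm{wav},\alpha,s,p,1})\le C\,N^{-\alpha}.$$
   Context: Conventions: $1/\infty=0$ and $r^{1/\infty}=1$ for all real $r$; $p'$, $q'$ denote conjugate exponents. Fix an integer base $b\ge2$. Put $\Delta_{-1}=\{0\}$, $\Delta_j=\{0,1,\dots,b^j-1\}$ for $j\in\mathbb{N}_0$, $\nabla_0=\{0\}$ and $\nabla_j=\{0,1,\dots,b-1\}$ for $j\ge1$. Univariate Haar functions on $[0,1]$: $\psi^0_{0,0}=1_{[0,1)}$ and, for $j\ge1$, $i\in\nabla_j$, $k\in\Delta_{j-1}$, $\psi^j_{i,k}(x)=b^{j/2-1}\big(b\,1_{[b^{-j}(bk+i),\,b^{-j}(bk+i+1))}(x)-1_{[b^{1-j}k,\,b^{1-j}(k+1))}(x)\big)$. For $\mathbf{j}\in\mathbb{N}_0^s$ let $|\mathbf{j}|=j_1+\dots+j_s$, $\nabla_{\mathbf{j}}=\nabla_{j_1}\times\dots\times\nabla_{j_s}$,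 $\Delta_{\mathbf{j}-\mathbf{1}}=\Delta_{j_1-1}\times\dots\times\Delta_{j_s-1}$, and $\Psi^{\mathbf{j}}_{\mathbf{i},\mathbf{k}}(\mathbf{x})=\prod_{\ell=1}^s\psi^{j_\ell}_{i_\ell,k_\ell}(x_\ell)$. Write $\langle f,g\rangle=\int_{[0,1]^s}fg$. Haar wavelet space: for $p\in[1,\infty]$, $\alpha\in\mathbb{R}$, $q\in[1,\infty)$, and $f\in L_1([0,1]^s)$ put $\|f\|^q_{\mathrm{wav},\alpha,s,p,q}=\sum_{L=0}^\infty b^{q(\alpha-1/p+1/2)L}\sum_{|\mathbf{j}|=L}\Big(\sum_{\mathbf{k}\in\Delta_{\mathbf{j}-\mathbf{1}}}\sum_{\mathbf{i}\in\nabla_{\mathbf{j}}}|\langle f,\Psi^{\mathbf{j}}_{\mathbf{i},\mathbf{k}}\rangle|^p\Big)^{q/p}$ (with the inner $\ell_p$-sum replaced by a maximum if $p=\infty$), and $\mathcal{H}_{\mathrm{wav},\alpha,s,p,q}=\{f\in L_1([0,1]^s):\|f\|_{\mathrm{wav},\alpha,s,p,q}<\infty\}$. For $q=\infty$, $\|f\|_{\mathrm{wav},\alpha,s,p,\infty}=\sup_{\mathbf{j}\in\mathbb{N}_0^s}b^{(\alpha-1/p+1/2)|\mathbf{j}|}\big(\sum_{\mathbf{k}}\sum_{\mathbf{i}}|\langle f,\Psi^{\mathbf{j}}_{\mathbf{i},\mathbf{k}}\rangle|^p\big)^{1/p}$, and $\mathcal{H}_{\mathrm{wav},\alpha,s,p,\infty}$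 consists of those $f\in L_1$ with finite norm whose wavelet series $\mathcal{S}(f)=\sum_{\mathbf{j}}\sum_{\mathbf{k}}\sum_{\mathbf{i}}\langle f,\Psi^{\mathbf{j}}_{\mathbf{i},\mathbf{k}}\rangle\Psi^{\mathbf{j}}_{\mathbf{i},\mathbf{k}}$ converges pointwise and equals $f$ a.e. Under the stated conditions on $\alpha$, for every $f$ in the space the series $\mathcal{S}(f)(\mathbf{x})$ converges absolutely at every $\mathbf{x}\in[0,1]^s$ and equals $f$ a.e.; each $f$ is identified with $\mathcal{S}(f)$, so point evaluation is well defined. Nets: for $t,m\in\mathbb{N}_0$, a finite point set $P\subset[0,1)^s$ is a $(t,m,s)$-net in base $b$ if every elementary interval $\prod_{\ell=1}^s[a_\ell b^{-d_\ell},(a_\ell+1)b^{-d_\ell})$ with $d_\ell\in\mathbb{N}_0$, $0\le a_\ell<b^{d_\ell}$, of volume $b^{t-m}$ contains exactly $b^t$ points of $P$; then $|P|=b^m$. The QMC cubature is $Q_P(f)=b^{-m}\sum_{\mathbf{p}\in P}f(\mathbf{p})$. For a normed function space $X$, $e^{\mathrm{wor}}(Q,X)=\sup\{|\int_{[0,1]^s}f(\mathbf{x})\,d\mathbf{x}-Q(f)|: f\in X,\ \|f\|_X\le1\}$. *)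

theory Defs
  imports "HOL-Analysis.Analysis"
begin

definition einv :: "ereal \<Rightarrow> real" where
  "einv p = (if p = \<infinity> then 0 else 1 / real_of_ereal p)"

text \<open>Index sets: nabla b j = \<nabla>_j, Delta b j = \<Delta>_{j-1} (with \<Delta>_{-1} = {0}).\<close>
definition nabla :: "nat \<Rightarrow> nat \<Rightarrow> nat set" where
  "nabla b j = (if j = 0 then {0} else {0..<b})"

definition Delta :: "nat \<Rightarrow> nat \<Rightarrow> nat set" where
  "Delta b j = (if j = 0 then {0} else {0..<b ^ (j - 1)})"

definition haar1 :: "nat \<Rightarrow> nat \<Rightarrow> nat \<Rightarrow> nat \<Rightarrow> real \<Rightarrow> real" where
  "haar1 b j i k x =
    (if j = 0 then (indicator {0..<1} x :: real)
     else real b powr (real j / 2 - 1) *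
       (real b * (indicator {(real b * real k + real i) / real b ^ j ..<
                             (real b * real k + real i + 1) / real b ^ j} x :: real)
        - (indicator {real k / real b ^ (j - 1) ..< (real k + 1) / real b ^ (j - 1)} x :: real)))"

text \<open>Multivariate Haar functions; the dimension s is CARD('n).\<close>
definition haar :: "nat \<Rightarrow> ('n::finite \<Rightarrow> nat) \<Rightarrow> ('n \<Rightarrow> nat) \<Rightarrow> ('n \<Rightarrow> nat) \<Rightarrow> real^'n \<Rightarrow> real" where
  "haar b j i k x = (\<Prod>l\<in>UNIV. haar1 b (j l) (i l) (k l) (x $ l))"

definition unit_cube :: "(real^'n::finite) set" where
  "unit_cube = {x. \<forall>l. 0 \<le> x $ l \<and> x $ l \<le> 1}"

definition haar_coeff :: "nat \<Rightarrow> (real^'n::finite \<Rightarrow> real) \<Rightarrow> ('n \<Rightarrow> nat) \<Rightarrow> ('n \<Rightarrow> nat) \<Rightarrow> ('n \<Rightarrow> nat) \<Rightarrow> real" where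
  "haar_coeff b f j i k = (LINT x|lebesgue_on unit_cube. f x * haar b j i k x)"

definition haar_index :: "nat \<Rightarrow> ('n::finite \<Rightarrow> nat) \<Rightarrow> (('n \<Rightarrow> nat) \<times> ('n \<Rightarrow> nat)) set" where
  "haar_index b j = {(i, k). \<forall>l. i l \<in> nabla b (j l) \<and> k l \<in> Delta b (j l)}"

definition level_norm :: "nat \<Rightarrow> ereal \<Rightarrow> (real^'n::finite \<Rightarrow> real) \<Rightarrow> ('n \<Rightarrow> nat) \<Rightarrow> real" where
  "level_norm b p f j =
    (if p = \<infinity> then Max ((\<lambda>(i, k). \<bar>haar_coeff b f j i k\<bar>) ` haar_index b j)
     else (\<Sum>(i, k)\<in>haar_index b j. \<bar>haar_coeff b f j i k\<bar> powr real_of_ereal p)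
            powr (1 / real_of_ereal p))"

definition wav_term :: "nat \<Rightarrow> real \<Rightarrow> ereal \<Rightarrow> ereal \<Rightarrow> (real^'n::finite \<Rightarrow> real) \<Rightarrow> nat \<Rightarrow> real" where
  "wav_term b \<alpha> p q f L =
    real b powr (real_of_ereal q * (\<alpha> - einv p + 1/2) * real L) *
    (\<Sum>j\<in>{j::'n \<Rightarrow> nat. sum j UNIV = L}. level_norm b p f j powr real_of_ereal q)"

definition wav_level_weighted :: "nat \<Rightarrow> real \<Rightarrow> ereal \<Rightarrow> (real^'n::finite \<Rightarrow> real) \<Rightarrow> ('n \<Rightarrow> nat) \<Rightarrow> real" where
  "wav_level_weighted b \<alpha> p f j =
     real b powr ((\<alpha> - einv p + 1/2) * real (sum j UNIV)) * level_norm b p f j"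

definition wav_norm :: "nat \<Rightarrow> real \<Rightarrow> ereal \<Rightarrow> ereal \<Rightarrow> (real^'n::finite \<Rightarrow> real) \<Rightarrow> real" where
  "wav_norm b \<alpha> p q f =
    (if q = \<infinity> then (SUP j. wav_level_weighted b \<alpha> p f j)
     else (\<Sum>L. wav_term b \<alpha> p q f L) powr (1 / real_of_ereal q))"

definition haar_all :: "nat \<Rightarrow> (('n::finite \<Rightarrow> nat) \<times> ('n \<Rightarrow> nat) \<times> ('n \<Rightarrow> nat)) set" where
  "haar_all b = {(j, i, k). (i, k) \<in> haar_index b j}"

definition wav_series :: "nat \<Rightarrow> (real^'n::finite \<Rightarrow> real) \<Rightarrow> real^'n \<Rightarrow> real" where
  "wav_series b f x = infsum (\<lambda>(j, i, k). haar_coeff b f j i k * haar b j i k x) (haar_all b)"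

definition wav_space :: "nat \<Rightarrow> real \<Rightarrow> ereal \<Rightarrow> ereal \<Rightarrow> (real^'n::finite \<Rightarrow> real) set" where
  "wav_space b \<alpha> p q = {f. integrable (lebesgue_on unit_cube) f \<and>
     (if q = \<infinity> then
        bdd_above (range (wav_level_weighted b \<alpha> p f)) \<and>
        (\<forall>x\<in>unit_cube. (\<lambda>(j, i, k). haar_coeff b f j i k * haar b j i k x) summable_on haar_all b) \<and>
        (AE x in lebesgue_on unit_cube. wav_series b f x = f x)
      else summable (wav_term b \<alpha> p q f))}"

definition qmc :: "nat \<Rightarrow> nat \<Rightarrow> (real^'n::finite) set \<Rightarrow> (real^'n \<Rightarrow> real) \<Rightarrow> real" where
  "qmc b m P g = real b powr (- real m) * (\<Sum>x\<in>P. g x)"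

text \<open>Worst-case error on the unit ball; point values of f are those of S(f).\<close>
definition e_wor_wav :: "nat \<Rightarrow> real \<Rightarrow> ereal \<Rightarrow> ereal \<Rightarrow> nat \<Rightarrow> (real^'n::finite) set \<Rightarrow> ereal" where
  "e_wor_wav b \<alpha> p q m P =
    (SUP f \<in> {f \<in> wav_space b \<alpha> p q. wav_norm b \<alpha> p q f \<le> 1}.
       ereal \<bar>(LINT x|lebesgue_on unit_cube. f x) - qmc b m P (wav_series b f)\<bar>)"

definition elem_interval :: "nat \<Rightarrow> ('n::finite \<Rightarrow> nat) \<Rightarrow> ('n \<Rightarrow> nat) \<Rightarrow> (real^'n) set" where
  "elem_interval b d a =
     {x. \<forall>l. real (a l) / real b ^ d l \<le> x $ l \<and> x $ l < (real (a l) + 1) / real b ^ d l}"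

definition is_net :: "nat \<Rightarrow> nat \<Rightarrow> nat \<Rightarrow> (real^'n::finite) set \<Rightarrow> bool" where
  "is_net b t m P \<longleftrightarrow> t \<le> m \<and> finite P \<and> P \<subseteq> {x. \<forall>l. 0 \<le> x $ l \<and> x $ l < 1} \<and>
     (\<forall>d a. sum d UNIV = m - t \<and> (\<forall>l. a l < b ^ d l) \<longrightarrow>
        card (P \<inter> elem_interval b d a) = b ^ t)"

end

theory Submission
  imports Defs "HOL-Real_Asymp.Real_Asymp"
begin



definition cnt :: "nat \<Rightarrow> (real^'n::finite) set \<Rightarrow> ('n \<Rightarrow> nat) \<Rightarrow> ('n \<Rightarrow> nat) \<Rightarrow> nat" where
  "cnt b P d a = card {x\<in>P. \<forall>l. \<lfloor>x$l * real b ^ d l\<rfloor> = int (a l)}"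

lemma floor_interval_iff:
  assumes "c > 0"
  shows "(real a / c \<le> y \<and> y < (real a + 1) / c) \<longleftrightarrow> \<lfloor>y * c\<rfloor> = int a"
  using assms by (simp add: floor_eq_iff pos_divide_le_eq pos_less_divide_eq)

lemma elem_interval_iff:
  assumes "b > 0"
  shows "x \<in> elem_interval b d a \<longleftrightarrow> (\<forall>l. \<lfloor>x$l * real b ^ d l\<rfloor> = int (a l))"
  using floor_interval_iff[of "real b ^ d _"] assms unfolding elem_interval_def by auto

lemma cnt_net:
  assumes "b > 0"
  shows "cnt b P d a = card (P \<inter> elem_interval b d a)"
  unfolding cnt_def using elem_interval_iff[OF assms, of _ d a]
  by (intro arg_cong[where f=card]) auto

lemma floor_div_b:
  assumes "b > 0"
  shows "\<lfloor>y * real b ^ d\<rfloor> = \<lfloor>y * real b ^ Suc d\<rfloor> div int b"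
proof -
  have "y * real b ^ d = (y * real b ^ Suc d) / real_of_int (int b)" using assms by simp
  then show ?thesis using floor_divide_real_eq_div[of "int b" "y * real b ^ Suc d"] by simp
qed

lemma sum_upd_Suc:
  fixes d :: "'n::finite \<Rightarrow> nat"
  shows "sum (d(l0 := Suc (d l0))) UNIV = Suc (sum d UNIV)"
proof -
  have "sum (d(l0 := Suc (d l0))) UNIV = Suc (d l0) + sum d (UNIV - {l0})"
    by (subst sum.remove[of _ l0]) (auto intro!: sum.cong)
  also have "\<dots> = Suc (sum d UNIV)" by (subst (2) sum.remove[of _ l0]) auto
  finally show ?thesis .
qed

lemma sum_upd_pred:
  fixes d :: "'n::finite \<Rightarrow> nat"
  assumes "d l0 > 0"
  shows "Suc (sum (d(l0 := d l0 - 1)) UNIV) = sum d UNIV"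
proof -
  have "(d(l0 := d l0 - 1))(l0 := Suc ((d(l0 := d l0 - 1)) l0)) = d" using assms by auto
  then show ?thesis using sum_upd_Suc[of "d(l0 := d l0 - 1)" l0] by simp
qed

lemma net_count_exact_aux:
  assumes net: "is_net b t m P" and b: "b \<ge> 2"
  shows "\<forall>d a. sum d UNIV + n = m - t \<longrightarrow> (\<forall>l. a l < b ^ d l) \<longrightarrow> cnt b P (d::'n::finite \<Rightarrow> nat) a = b ^ (m - sum d UNIV)"
proof (induction n)
  case 0
  show ?case
  proof (intro allI impI)
    fix d :: "'n \<Rightarrow> nat" and a
    assume "sum d UNIV + 0 = m - t" "\<forall>l. a l < b ^ d l"
    then have "card (P \<inter> elem_interval b d a) = b ^ t" using net unfolding is_net_def by auto
    moreover have "m - sum d UNIV = t" using \<open>sum d UNIV + 0 = m - t\<close> net unfolding is_net_def by auto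
    ultimately show "cnt b P d a = b ^ (m - sum d UNIV)" using cnt_net[of b P d a] b by simp
  qed
next
  case (Suc n)
  show ?case
  proof (intro allI impI)
    fix d :: "'n \<Rightarrow> nat" and a :: "'n \<Rightarrow> nat"
    assume h1: "sum d UNIV + Suc n = m - t" and h2: "\<forall>l. a l < b ^ d l"
    obtain l0 :: 'n where True by blast
    define d' where "d' = d(l0 := Suc (d l0))"
    define a' where "a' r = a(l0 := b * a l0 + r)" for r
    have sd': "sum d' UNIV = Suc (sum d UNIV)" unfolding d'_def by (rule sum_upd_Suc)
    have IH: "cnt b P d' (a' r) = b ^ (m - sum d' UNIV)" if "r < b" for r
    proof -
      have "\<forall>l. a' r l < b ^ d' l"
      proof
        fix l show "a' r l < b ^ d' l"
        proof (cases "l = l0")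
          case True
          have "a l0 + 1 \<le> b ^ d l0" using h2 by (simp add: Suc_le_eq)
          then have "b * (a l0 + 1) \<le> b * b ^ d l0" by (rule mult_le_mono2)
          then have "b * a l0 + r < b * b ^ d l0" using that by (simp add: algebra_simps)
          then show ?thesis using True unfolding a'_def d'_def by simp
        next
          case False then show ?thesis using h2 unfolding a'_def d'_def by simp
        qed
      qed
      then show ?thesis using Suc.IH h1 sd' by auto
    qed
    have fin: "finite P" using net unfolding is_net_def by auto
    have seteq: "{x\<in>P. \<forall>l. \<lfloor>x$l * real b ^ d l\<rfloor> = int (a l)} =
       (\<Union>r\<in>{..<b}. {x\<in>P. \<forall>l. \<lfloor>x$l * real b ^ d' l\<rfloor> = int (a' r l)})"
    proof (intro set_eqI iffI)
      fix x assume "x \<in> {x\<in>P. \<forall>l. \<lfloor>x$l * real b ^ d l\<rfloor> = int (a l)}"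
      then have xP: "x \<in> P" and hx: "\<forall>l. \<lfloor>x$l * real b ^ d l\<rfloor> = int (a l)" by auto
      define n0 where "n0 = \<lfloor>x$l0 * real b ^ Suc (d l0)\<rfloor>"
      have "n0 div int b = int (a l0)" using hx floor_div_b[of b "x$l0" "d l0"] b unfolding n0_def by simp
      then have "n0 = int b * int (a l0) + n0 mod int b"
        by (metis add.commute mod_div_mult_eq mult.commute)
      moreover have "0 \<le> n0 mod int b" "n0 mod int b < int b" using b by auto
      ultimately obtain r where r: "r < b" "n0 = int b * int (a l0) + int r"
        by (metis nonneg_int_cases of_nat_less_iff)
      have "\<lfloor>x$l * real b ^ d' l\<rfloor> = int (a' r l)" for l
      proof (cases "l = l0")
        case True then show ?thesis using r(2) unfolding d'_def a'_def n0_def by simp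
      next
        case False then show ?thesis using hx unfolding d'_def a'_def by simp
      qed
      then have "\<forall>l. \<lfloor>x$l * real b ^ d' l\<rfloor> = int (a' r l)" by blast
      then show "x \<in> (\<Union>r\<in>{..<b}. {x\<in>P. \<forall>l. \<lfloor>x$l * real b ^ d' l\<rfloor> = int (a' r l)})"
        using xP r by auto
    next
      fix x assume "x \<in> (\<Union>r\<in>{..<b}. {x\<in>P. \<forall>l. \<lfloor>x$l * real b ^ d' l\<rfloor> = int (a' r l)})"
      then obtain r where r: "r < b" and xP: "x \<in> P" and hx: "\<forall>l. \<lfloor>x$l * real b ^ d' l\<rfloor> = int (a' r l)" by auto
      have "\<lfloor>x$l * real b ^ d l\<rfloor> = int (a l)" for l
      proof (cases "l = l0")
        case True
        have "\<lfloor>x$l0 * real b ^ Suc (d l0)\<rfloor> = int b * int (a l0) + int r"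
          using hx[rule_format, of l0] unfolding d'_def a'_def by simp
        then have "\<lfloor>x$l0 * real b ^ d l0\<rfloor> = (int b * int (a l0) + int r) div int b"
          using floor_div_b[of b "x$l0" "d l0"] b by simp
        also have "\<dots> = int (a l0)" using r b by simp
        finally show ?thesis using True by simp
      next
        case False then show ?thesis using hx[rule_format, of l] unfolding d'_def a'_def by simp
      qed
      then show "x \<in> {x\<in>P. \<forall>l. \<lfloor>x$l * real b ^ d l\<rfloor> = int (a l)}" using xP by auto
    qed
    have disj: "\<forall>r1\<in>{..<b}. \<forall>r2\<in>{..<b}. r1 \<noteq> r2 \<longrightarrow>
        {x\<in>P. \<forall>l. \<lfloor>x$l * real b ^ d' l\<rfloor> = int (a' r1 l)} \<inter> {x\<in>P. \<forall>l. \<lfloor>x$l * real b ^ d' l\<rfloor> = int (a' r2 l)} = {}"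
    proof (intro ballI impI)
      fix r1 r2 :: nat assume "r1 \<noteq> r2"
      show "{x\<in>P. \<forall>l. \<lfloor>x$l * real b ^ d' l\<rfloor> = int (a' r1 l)} \<inter> {x\<in>P. \<forall>l. \<lfloor>x$l * real b ^ d' l\<rfloor> = int (a' r2 l)} = {}"
      proof (rule ccontr)
        assume "\<not> ?thesis"
        then obtain x where "\<lfloor>x$l0 * real b ^ d' l0\<rfloor> = int (a' r1 l0)" "\<lfloor>x$l0 * real b ^ d' l0\<rfloor> = int (a' r2 l0)"
          by blast
        then have "a' r1 l0 = a' r2 l0" by simp
        then show False using \<open>r1 \<noteq> r2\<close> unfolding a'_def by simp
      qed
    qed
    have "cnt b P d a = (\<Sum>r<b. cnt b P d' (a' r))"
      unfolding cnt_def seteq by (rule card_UN_disjoint) (use fin disj in auto)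
    also have "\<dots> = b * b ^ (m - sum d' UNIV)" using IH by simp
    also have "\<dots> = b ^ (m - sum d UNIV)"
    proof -
      have "m - sum d UNIV = Suc (m - sum d' UNIV)" using h1 sd' by linarith
      then show ?thesis by simp
    qed
    finally show "cnt b P d a = b ^ (m - sum d UNIV)" .
  qed
qed

lemma net_count_exact:
  assumes net: "is_net b t m P" and b: "b \<ge> 2" and "sum d UNIV \<le> m - t" and "\<forall>l. a l < b ^ d l"
  shows "cnt b P (d::'n::finite \<Rightarrow> nat) a = b ^ (m - sum d UNIV)"
  using net_count_exact_aux[OF net b, of "m - t - sum d UNIV"] assms by auto


lemma floor_div_pow:
  assumes "b > 0"
  shows "\<lfloor>y * real b ^ (d - 1)\<rfloor> = \<lfloor>y * real b ^ d\<rfloor> div int b \<or> d = 0"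
  using floor_div_b[OF assms, of y "d - 1"] by (cases d) auto

lemma net_count_upper_aux:
  assumes net: "is_net b t m P" and b: "b \<ge> 2"
  shows "\<forall>d a. sum d UNIV = m - t + n \<longrightarrow> (\<forall>l. a l < b ^ d l) \<longrightarrow> cnt b P (d::'n::finite \<Rightarrow> nat) a \<le> b ^ t"
proof (induction n)
  case 0
  then show ?case using net_count_exact[OF net b] net unfolding is_net_def by auto
next
  case (Suc n)
  show ?case
  proof (intro allI impI)
    fix d :: "'n \<Rightarrow> nat" and a :: "'n \<Rightarrow> nat"
    assume h1: "sum d UNIV = m - t + Suc n" and h2: "\<forall>l. a l < b ^ d l"
    obtain l0 where l0: "d l0 > 0"
    proof (rule ccontr)
      assume "\<not> thesis"
      then have "\<forall>l. d l = 0" using that by auto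
      then show False using h1 by simp
    qed
    define d' where "d' = d(l0 := d l0 - 1)"
    define a' where "a' = a(l0 := a l0 div b)"
    have sd: "sum d' UNIV = m - t + n" using sum_upd_pred[of d l0, OF l0] h1 unfolding d'_def by simp
    have ha: "\<forall>l. a' l < b ^ d' l"
    proof
      fix l show "a' l < b ^ d' l"
      proof (cases "l = l0")
        case True
        have "b * b ^ (d l0 - 1) = b ^ d l0" using l0 by (cases "d l0") auto
        then have "a l0 < b * b ^ (d l0 - 1)" using h2 by simp
        then have "a l0 div b < b ^ (d l0 - 1)" using b by (simp add: div_less_iff_less_mult mult.commute)
        then show ?thesis using True unfolding a'_def d'_def by simp
      next
        case False then show ?thesis using h2 unfolding a'_def d'_def by simp
      qed
    qed
    have fin: "finite P" using net unfolding is_net_def by auto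
    have sub: "{x\<in>P. \<forall>l. \<lfloor>x$l * real b ^ d l\<rfloor> = int (a l)} \<subseteq> {x\<in>P. \<forall>l. \<lfloor>x$l * real b ^ d' l\<rfloor> = int (a' l)}"
    proof safe
      fix x l assume "x \<in> P" "\<forall>l. \<lfloor>x$l * real b ^ d l\<rfloor> = int (a l)"
      then have hx: "\<lfloor>x$l * real b ^ d l\<rfloor> = int (a l)" for l by blast
      show "\<lfloor>x$l * real b ^ d' l\<rfloor> = int (a' l)"
      proof (cases "l = l0")
        case True
        have "\<lfloor>x$l0 * real b ^ (d l0 - 1)\<rfloor> = \<lfloor>x$l0 * real b ^ d l0\<rfloor> div int b"
          using floor_div_pow[of b "x$l0" "d l0"] b l0 by auto
        then show ?thesis using True hx[of l0] unfolding a'_def d'_def by (simp add: zdiv_int)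
      next
        case False then show ?thesis using hx[of l] unfolding a'_def d'_def by simp
      qed
    qed
    have "cnt b P d a \<le> cnt b P d' a'" unfolding cnt_def by (rule card_mono) (use fin sub in auto)
    also have "\<dots> \<le> b ^ t" using Suc.IH sd ha by blast
    finally show "cnt b P d a \<le> b ^ t" .
  qed
qed

lemma net_count_upper:
  assumes net: "is_net b t m P" and b: "b \<ge> 2" and "\<forall>l. a l < b ^ d l"
  shows "cnt b P (d::'n::finite \<Rightarrow> nat) a \<le> b ^ (t + (m - t - sum d UNIV))"
proof (cases "sum d UNIV \<le> m - t")
  case True
  then have "cnt b P d a = b ^ (m - sum d UNIV)" using net_count_exact[OF net b True] assms by simp
  moreover have "m - sum d UNIV = t + (m - t - sum d UNIV)" using True net unfolding is_net_def by auto
  ultimately show ?thesis by simp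
next
  case False
  then show ?thesis using net_count_upper_aux[OF net b, of "sum d UNIV - (m - t)"] assms by auto
qed

lemma net_card:
  fixes P :: "(real^'n::finite) set"
  assumes net: "is_net b t m P" and b: "b \<ge> 2"
  shows "card P = b ^ m"
proof -
  have "cnt b P (\<lambda>_. 0) (\<lambda>_. 0) = b ^ m" using net_count_exact[OF net b, of "\<lambda>_. 0" "\<lambda>_. 0"] by simp
  moreover have "{x\<in>P. \<forall>l::'n. \<lfloor>x$l * real b ^ 0\<rfloor> = int 0} = P"
  proof -
    have "\<lfloor>x$l * real b ^ 0\<rfloor> = int 0" if "x \<in> P" for x l
    proof -
      have "0 \<le> x$l \<and> x$l < 1" using net that unfolding is_net_def by blast
      then show ?thesis by (simp add: floor_eq_iff)
    qed
    then show ?thesis by auto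
  qed
  ultimately show ?thesis unfolding cnt_def by simp
qed

lemma cnt_sum_le:
  fixes P :: "(real^'n::finite) set"
  assumes fin: "finite P" and K: "finite K"
  shows "(\<Sum>k\<in>K. cnt b P d k) \<le> card P"
proof -
  have "(\<Sum>k\<in>K. cnt b P d k) = card (\<Union>k\<in>K. {x\<in>P. \<forall>l. \<lfloor>x$l * real b ^ d l\<rfloor> = int (k l)})"
    unfolding cnt_def
  proof (rule card_UN_disjoint[symmetric])
    show "finite K" by fact
    show "\<forall>i\<in>K. finite {x \<in> P. \<forall>l. \<lfloor>x $ l * real b ^ d l\<rfloor> = int (i l)}" using fin by auto
    show "\<forall>i\<in>K. \<forall>j\<in>K. i \<noteq> j \<longrightarrow> {x \<in> P. \<forall>l. \<lfloor>x $ l * real b ^ d l\<rfloor> = int (i l)} \<inter> {x \<in> P. \<forall>l. \<lfloor>x $ l * real b ^ d l\<rfloor> = int (j l)} = {}"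
    proof (intro ballI impI)
      fix i j :: "'n \<Rightarrow> nat" assume "i \<noteq> j"
      then obtain l where "i l \<noteq> j l" by auto
      show "{x \<in> P. \<forall>l. \<lfloor>x $ l * real b ^ d l\<rfloor> = int (i l)} \<inter> {x \<in> P. \<forall>l. \<lfloor>x $ l * real b ^ d l\<rfloor> = int (j l)} = {}"
      proof (rule ccontr)
        assume "\<not> ?thesis"
        then obtain x where "\<lfloor>x $ l * real b ^ d l\<rfloor> = int (i l)" "\<lfloor>x $ l * real b ^ d l\<rfloor> = int (j l)" by blast
        then show False using \<open>i l \<noteq> j l\<close> by simp
      qed
    qed
  qed
  also have "\<dots> \<le> card P" by (rule card_mono) (use fin in auto)
  finally show ?thesis .
qed




definition phi :: "nat \<Rightarrow> nat \<Rightarrow> nat \<Rightarrow> nat \<Rightarrow> int \<Rightarrow> real" where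
  "phi b j i k n = (if j = 0 then (if n = 0 then 1 else 0)
     else real b powr (real j / 2 - 1) * (real b * (if n = int (b*k+i) then 1 else 0) - (if n div int b = int k then 1 else 0)))"

lemma haar1_floor:
  assumes b: "b \<ge> 2"
  shows "haar1 b j i k y = phi b j i k \<lfloor>y * real b ^ j\<rfloor>"
proof (cases "j = 0")
  case True
  then show ?thesis unfolding haar1_def phi_def by (simp add: indicator_def floor_eq_iff)
next
  case False
  have bj: "real b ^ j > 0" "real b ^ (j - 1) > 0" using b by auto
  have i1: "(indicator {(real b * real k + real i) / real b ^ j ..< (real b * real k + real i + 1) / real b ^ j} y :: real)
      = (if \<lfloor>y * real b ^ j\<rfloor> = int (b*k+i) then 1 else 0)"
    using floor_interval_iff[OF bj(1), of "b*k+i" y] by (simp add: indicator_def)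
  have "\<lfloor>y * real b ^ (j - 1)\<rfloor> = \<lfloor>y * real b ^ j\<rfloor> div int b"
    using floor_div_b[of b y "j - 1"] b False by simp
  then have i2: "(indicator {real k / real b ^ (j - 1) ..< (real k + 1) / real b ^ (j - 1)} y :: real)
      = (if \<lfloor>y * real b ^ j\<rfloor> div int b = int k then 1 else 0)"
    using floor_interval_iff[OF bj(2), of k y] by (simp add: indicator_def)
  show ?thesis unfolding haar1_def phi_def using False i1 i2 by simp
qed

lemma haar1_bound:
  assumes b: "b \<ge> 2" and i: "i \<in> nabla b j" and k: "k \<in> Delta b j"
  shows "\<bar>haar1 b j i k y\<bar> \<le> real b powr (real j / 2) * (if \<lfloor>y * real b ^ (j - 1)\<rfloor> = int k then 1 else 0)"
proof (cases "j = 0")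
  case True
  then have "i = 0" "k = 0" using i k unfolding nabla_def Delta_def by auto
  then show ?thesis using True b unfolding haar1_def by (simp add: indicator_def floor_eq_iff)
next
  case False
  define n where "n = \<lfloor>y * real b ^ j\<rfloor>"
  have ib: "i < b" using i False unfolding nabla_def by auto
  have fl: "\<lfloor>y * real b ^ (j - 1)\<rfloor> = n div int b"
    using floor_div_b[of b y "j - 1"] b False unfolding n_def by simp
  have h: "haar1 b j i k y = real b powr (real j / 2 - 1) * (real b * (if n = int (b*k+i) then 1 else 0) - (if n div int b = int k then 1 else 0))"
    using haar1_floor[OF b, of j i k y] False unfolding phi_def n_def by simp
  have pw: "real b powr (real j / 2) = real b powr (real j / 2 - 1) * real b"
    using b by (simp add: powr_diff)
  have c: "real b powr (real j / 2 - 1) > 0" using b by simp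
  show ?thesis
  proof (cases "n = int (b*k+i)")
    case True
    then have "n div int b = int k" using ib b by simp
    then show ?thesis using h True fl pw c b by (simp add: abs_mult)
  next
    case False
    show ?thesis
    proof (cases "n div int b = int k")
      case True
      then show ?thesis using h False fl pw c b by (simp add: abs_mult)
    next
      case False2: False
      then show ?thesis using h False fl by simp
    qed
  qed
qed

lemma prod_if_01:
  fixes Q :: "'a \<Rightarrow> bool"
  assumes "finite A"
  shows "(\<Prod>l\<in>A. (if Q l then 1 else 0 :: real)) = (if \<forall>l\<in>A. Q l then 1 else 0)"
proof (cases "\<forall>l\<in>A. Q l")
  case True then show ?thesis by simp
next
  case False
  then obtain l where "l \<in> A" "\<not> Q l" by blast
  then show ?thesis using assms False by (simp add: prod_zero_iff)
qed

lemma haar_index_nabla: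
  assumes "(i, k) \<in> haar_index b j"
  shows "i l \<in> nabla b (j l)" "k l \<in> Delta b (j l)"
  using assms unfolding haar_index_def by auto

lemma haar_bound:
  fixes j :: "'n::finite \<Rightarrow> nat"
  assumes b: "b \<ge> 2" and ik: "(i, k) \<in> haar_index b j"
  shows "\<bar>haar b j i k x\<bar> \<le> real b powr (real (sum j UNIV) / 2) *
            (if \<forall>l. \<lfloor>x$l * real b ^ (j l - 1)\<rfloor> = int (k l) then 1 else 0)"
proof -
  have "\<bar>haar b j i k x\<bar> = (\<Prod>l\<in>UNIV. \<bar>haar1 b (j l) (i l) (k l) (x $ l)\<bar>)"
    unfolding haar_def by (simp add: abs_prod)
  also have "\<dots> \<le> (\<Prod>l\<in>UNIV. real b powr (real (j l) / 2) * (if \<lfloor>x$l * real b ^ (j l - 1)\<rfloor> = int (k l) then 1 else 0))"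
    by (rule prod_mono) (use haar1_bound[OF b haar_index_nabla[OF ik]] in auto)
  also have "\<dots> = (\<Prod>l\<in>UNIV. real b powr (real (j l) / 2)) * (\<Prod>l\<in>UNIV. (if \<lfloor>x$l * real b ^ (j l - 1)\<rfloor> = int (k l) then 1 else 0))"
    by (rule prod.distrib)
  also have "(\<Prod>l\<in>UNIV. real b powr (real (j l) / 2)) = real b powr (\<Sum>l\<in>UNIV. real (j l) / 2)"
    using b by (simp add: powr_sum)
  also have "(\<Sum>l\<in>UNIV. real (j l) / 2) = real (sum j UNIV) / 2"
    by (simp add: sum_divide_distrib)
  also have "(\<Prod>l\<in>UNIV. (if \<lfloor>x$l * real b ^ (j l - 1)\<rfloor> = int (k l) then 1 else 0 :: real)) =
      (if \<forall>l. \<lfloor>x$l * real b ^ (j l - 1)\<rfloor> = int (k l) then 1 else 0)"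
    by (simp add: prod_if_01)
  finally show ?thesis .
qed

lemma sum_if_cnt:
  assumes "finite P"
  shows "(\<Sum>x\<in>P. (if \<forall>l. \<lfloor>x$l * real b ^ d l\<rfloor> = int (k l) then 1 else 0 :: real)) = real (cnt b P d k)"
proof -
  have "P \<inter> {x. \<forall>l. \<lfloor>x$l * real b ^ d l\<rfloor> = int (k l)} = {x\<in>P. \<forall>l. \<lfloor>x$l * real b ^ d l\<rfloor> = int (k l)}" by blast
  then show ?thesis unfolding cnt_def using assms by (simp add: sum.If_cases)
qed




lemma int_div_eq_iff:
  assumes "b > 0"
  shows "(n::int) div int b = int k \<longleftrightarrow> int b * int k \<le> n \<and> n < int b * int k + int b"
proof
  assume h: "n div int b = int k"
  have "n = int b * (n div int b) + n mod int b" by simp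
  moreover have "0 \<le> n mod int b" "n mod int b < int b" using assms by auto
  ultimately have "n = int b * int k + n mod int b" "0 \<le> n mod int b" "n mod int b < int b" using h by auto
  then show "int b * int k \<le> n \<and> n < int b * int k + int b" by linarith
next
  assume h: "int b * int k \<le> n \<and> n < int b * int k + int b"
  define r where "r = n - int b * int k"
  have r: "0 \<le> r" "r < int b" "n = int k * int b + r" using h unfolding r_def by auto
  then have "n div int b = int k + r div int b" using assms by simp
  also have "r div int b = 0" using r by simp
  finally show "n div int b = int k" by simp
qed

lemma phi_sum_zero:
  assumes b: "b \<ge> 2" and j: "j \<ge> 1" and i: "i < b" and k: "k < b ^ (j - 1)"
  shows "(\<Sum>n\<in>{0..<int b ^ j}. phi b j i k n) = 0"
proof -
  have bk: "b * (k + 1) \<le> b ^ j"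
  proof -
    have "b * (k + 1) \<le> b * b ^ (j - 1)" using k by (intro mult_le_mono2) simp
    also have "\<dots> = b ^ j" using j by (cases j) auto
    finally show ?thesis .
  qed
  have s1: "(\<Sum>n\<in>{0..<int b ^ j}. (if n = int (b*k+i) then 1 else 0 :: real)) = 1"
  proof -
    have "int (b*k+i) \<in> {0..<int b ^ j}"
    proof -
      have "b*k+i < b ^ j" using bk i by (simp add: algebra_simps)
      then have "int (b*k+i) < int (b ^ j)" by linarith
      then show ?thesis by simp
    qed
    then show ?thesis by (simp add: sum.delta')
  qed
  have seteq: "{n\<in>{0..<int b ^ j}. n div int b = int k} = {int b * int k..<int b * int k + int b}"
  proof -
    have h1: "int b * int k + int b \<le> int b ^ j"
    proof -
      have "int (b * (k+1)) \<le> int (b ^ j)" using bk by linarith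
      then show ?thesis by (simp add: algebra_simps)
    qed
    have h2: "0 \<le> int b * int k" by simp
    have iff: "\<And>n. n div int b = int k \<longleftrightarrow> int b * int k \<le> n \<and> n < int b * int k + int b"
      using int_div_eq_iff[of b] b by simp
    show ?thesis
    proof (intro set_eqI)
      fix n
      show "n \<in> {n\<in>{0..<int b ^ j}. n div int b = int k} \<longleftrightarrow> n \<in> {int b * int k..<int b * int k + int b}"
        unfolding mem_Collect_eq atLeastLessThan_iff iff using h1 h2 by linarith
    qed
  qed
  have s2: "(\<Sum>n\<in>{0..<int b ^ j}. (if n div int b = int k then 1 else 0 :: real)) = real b"
  proof -
    have "(\<Sum>n\<in>{0..<int b ^ j}. (if n div int b = int k then 1 else 0 :: real)) = real (card {n\<in>{0..<int b ^ j}. n div int b = int k})"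
      using sum.inter_filter[of "{0..<int b ^ j}" "\<lambda>_. 1 :: real" "\<lambda>n. n div int b = int k"] by simp
    also have "\<dots> = real b" unfolding seteq by simp
    finally show ?thesis .
  qed
  define c where "c = real b powr (real j / 2 - 1)"
  have "(\<Sum>n\<in>{0..<int b ^ j}. phi b j i k n) = (\<Sum>n\<in>{0..<int b ^ j}.
      (c * real b) * (if n = int (b*k+i) then 1 else 0 :: real) - c * (if n div int b = int k then 1 else 0 :: real))"
    unfolding phi_def c_def using j by (intro sum.cong refl) (simp add: algebra_simps)
  also have "\<dots> = (c * real b) * (\<Sum>n\<in>{0..<int b ^ j}. (if n = int (b*k+i) then 1 else 0 :: real))
      - c * (\<Sum>n\<in>{0..<int b ^ j}. (if n div int b = int k then 1 else 0 :: real))"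
    by (simp only: sum_subtractf sum_distrib_left)
  also have "\<dots> = 0" using s1 s2 by simp
  finally show ?thesis .
qed

lemma haar_floor:
  assumes b: "b \<ge> 2"
  shows "haar b j i k x = (\<Prod>l\<in>UNIV. phi b (j l) (i l) (k l) \<lfloor>x$l * real b ^ j l\<rfloor>)"
  unfolding haar_def using haar1_floor[OF b] by simp

lemma haar_sum_zero:
  fixes j :: "'n::finite \<Rightarrow> nat" and P :: "(real^'n) set"
  assumes net: "is_net b t m P" and b: "b \<ge> 2" and ik: "(i, k) \<in> haar_index b j"
    and j1: "1 \<le> sum j UNIV" and jm: "sum j UNIV \<le> m - t"
  shows "(\<Sum>x\<in>P. haar b j i k x) = 0"
proof -
  define g where "g x = (\<lambda>l. \<lfloor>x$l * real b ^ j l\<rfloor>)" for x :: "real^'n"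
  define A where "A = PiE UNIV (\<lambda>l. {0..<int b ^ j l})"
  define F where "F a = (\<Prod>l\<in>UNIV. phi b (j l) (i l) (k l) (a l))" for a :: "'n \<Rightarrow> int"
  have fin: "finite P" using net unfolding is_net_def by auto
  have finA: "finite A" unfolding A_def by (intro finite_PiE) auto
  have PA: "g ` P \<subseteq> A"
  proof
    fix y assume "y \<in> g ` P"
    then obtain x where x: "x \<in> P" "y = g x" by auto
    have "0 \<le> x$l \<and> x$l < 1" for l using net x unfolding is_net_def by blast
    then have "0 \<le> g x l \<and> g x l < int b ^ j l" for l
    proof -
      have h: "0 \<le> x$l" "x$l < 1" using \<open>\<And>l. 0 \<le> x$l \<and> x$l < 1\<close> by auto
      have bp: "real b ^ j l > 0" using b by simp
      have "0 \<le> x$l * real b ^ j l" using h bp by simp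
      moreover have "x$l * real b ^ j l < real b ^ j l" using h bp by simp
      ultimately show ?thesis unfolding g_def by (simp add: floor_less_iff)
    qed
    then show "y \<in> A" unfolding A_def x(2) by (auto simp: PiE_UNIV_domain)
  qed
  have "(\<Sum>x\<in>P. haar b j i k x) = (\<Sum>x\<in>P. F (g x))"
    unfolding F_def g_def by (intro sum.cong refl) (simp add: haar_floor[OF b])
  also have "\<dots> = (\<Sum>a\<in>A. \<Sum>x\<in>{x. x \<in> P \<and> g x = a}. F (g x))"
    by (rule sum.group[symmetric]) (use fin finA PA in auto)
  also have "\<dots> = (\<Sum>a\<in>A. real (card {x. x \<in> P \<and> g x = a}) * F a)"
    by (intro sum.cong refl) simp
  also have "\<dots> = (\<Sum>a\<in>A. real (b ^ (m - sum j UNIV)) * F a)"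
  proof (intro sum.cong refl)
    fix a assume a: "a \<in> A"
    then have a': "0 \<le> a l \<and> a l < int b ^ j l" for l unfolding A_def by (auto simp: PiE_UNIV_domain)
    define a0 where "a0 l = nat (a l)" for l
    have aa: "a l = int (a0 l)" for l using a'[of l] unfolding a0_def by simp
    have "{x. x \<in> P \<and> g x = a} = {x\<in>P. \<forall>l. \<lfloor>x$l * real b ^ j l\<rfloor> = int (a0 l)}"
      unfolding g_def by (auto simp: fun_eq_iff aa)
    moreover have "\<forall>l. a0 l < b ^ j l"
    proof
      fix l
      have "int (a0 l) < int (b ^ j l)" using a'[of l] aa[of l] by simp
      then show "a0 l < b ^ j l" by linarith
    qed
    ultimately have "card {x. x \<in> P \<and> g x = a} = b ^ (m - sum j UNIV)"
      using net_count_exact[OF net b jm, of a0] unfolding cnt_def by simp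
    then show "real (card {x. x \<in> P \<and> g x = a}) * F a = real (b ^ (m - sum j UNIV)) * F a" by simp
  qed
  also have "\<dots> = real (b ^ (m - sum j UNIV)) * (\<Sum>a\<in>A. F a)" by (simp add: sum_distrib_left)
  also have "(\<Sum>a\<in>A. F a) = (\<Prod>l\<in>UNIV. \<Sum>n\<in>{0..<int b ^ j l}. phi b (j l) (i l) (k l) n)"
    unfolding A_def F_def by (rule prod_sum_PiE[symmetric]) auto
  also have "\<dots> = 0"
  proof -
    obtain l0 where l0: "j l0 \<ge> 1"
    proof (rule ccontr)
      assume "\<not> thesis"
      then have "\<forall>l. j l = 0" using that by (metis less_one not_less)
      then show False using j1 by simp
    qed
    have "i l0 < b" "k l0 < b ^ (j l0 - 1)"
      using haar_index_nabla[OF ik, of l0] l0 unfolding nabla_def Delta_def by (auto split: if_splits)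
    then have "(\<Sum>n\<in>{0..<int b ^ j l0}. phi b (j l0) (i l0) (k l0) n) = 0"
      using phi_sum_zero[OF b l0] by simp
    then show ?thesis by (intro prod_zero) auto
  qed
  finally show ?thesis by simp
qed




lemma uc_borel: "unit_cube \<in> sets (borel :: (real^'n::finite) measure)"
proof -
  have "{x :: real^'n. \<forall>l. 0 \<le> x$l \<and> x$l \<le> 1} \<in> sets borel" by measurable
  then show ?thesis unfolding unit_cube_def by simp
qed

lemma uc_leb: "unit_cube \<in> sets (lebesgue :: (real^'n::finite) measure)"
  by (simp add: uc_borel)

lemma borel_to_leb_on:
  "(f :: real^'n::finite \<Rightarrow> real) \<in> borel_measurable borel \<Longrightarrow> f \<in> borel_measurable (lebesgue_on S)"
  by (simp add: measurable_completion measurable_restrict_space1)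

lemma haar0_eq: "haar b (\<lambda>_. 0) (\<lambda>_. 0) (\<lambda>_. 0) x = (\<Prod>l\<in>UNIV. (indicator {0..<1} (x$l) :: real))"
  unfolding haar_def haar1_def by simp

lemma haar_measurable:
  "haar b j i k \<in> borel_measurable (borel :: (real^'n::finite) measure)"
  unfolding haar_def haar1_def by measurable

lemma coeff0:
  fixes f :: "real^'n::finite \<Rightarrow> real"
  assumes f: "integrable (lebesgue_on unit_cube) f"
  shows "haar_coeff b f (\<lambda>_. 0) (\<lambda>_. 0) (\<lambda>_. 0) = (LINT x|lebesgue_on unit_cube. f x)"
proof -
  define N where "N = (\<Union>l. {x :: real^'n. x$l = 1})"
  have negN: "negligible N"
  proof -
    have "negligible {x :: real^'n. x$l = 1}" for l
    proof -
      have "{x :: real^'n. x$l = 1} = {x. x \<bullet> axis l 1 = 1}" by (simp add: cart_eq_inner_axis)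
      then show ?thesis using negligible_standard_hyperplane[of "axis l (1::real)" 1] by (simp add: Basis_real_def)
    qed
    then show ?thesis unfolding N_def by (intro negligible_Union) auto
  qed
  have "N \<inter> unit_cube \<in> null_sets lebesgue"
    using negligible_subset[OF negN, of "N \<inter> unit_cube"] negligible_iff_null_sets by blast
  then have null: "N \<inter> unit_cube \<in> null_sets (lebesgue_on unit_cube)"
    using null_sets_restrict_space[OF uc_leb] by blast
  have ae: "AE x in lebesgue_on unit_cube. f x * haar b (\<lambda>_. 0) (\<lambda>_. 0) (\<lambda>_. 0) x = f x"
  proof (rule AE_I'[OF null])
    show "{x \<in> space (lebesgue_on unit_cube). f x * haar b (\<lambda>_. 0) (\<lambda>_. 0) (\<lambda>_. 0) x \<noteq> f x} \<subseteq> N \<inter> unit_cube"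
    proof
      fix x assume x: "x \<in> {x \<in> space (lebesgue_on unit_cube). f x * haar b (\<lambda>_. 0) (\<lambda>_. 0) (\<lambda>_. 0) x \<noteq> f x}"
      then have xu: "x \<in> unit_cube" by simp
      have "haar b (\<lambda>_. 0) (\<lambda>_. 0) (\<lambda>_. 0) x \<noteq> 1" using x by auto
      moreover have "(\<forall>l. x$l \<in> {0..<1}) \<Longrightarrow> haar b (\<lambda>_. 0) (\<lambda>_. 0) (\<lambda>_. 0) x = 1"
        unfolding haar0_eq by (simp add: indicator_def)
      ultimately have "\<not> (\<forall>l. x$l \<in> {0..<1})" by blast
      then obtain l where "x$l \<notin> {0..<1}" by blast
      moreover have "0 \<le> x$l \<and> x$l \<le> 1" using xu unfolding unit_cube_def by blast
      ultimately have "x$l = 1" by auto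
      then show "x \<in> N \<inter> unit_cube" using xu unfolding N_def by auto
    qed
  qed
  have m1: "f \<in> borel_measurable (lebesgue_on unit_cube)" using f by auto
  have m2: "haar b (\<lambda>_. 0) (\<lambda>_. 0) (\<lambda>_. 0) \<in> borel_measurable (lebesgue_on unit_cube)"
    by (rule borel_to_leb_on[OF haar_measurable])
  show ?thesis unfolding haar_coeff_def
    by (rule integral_cong_AE[OF _ m1 ae]) (use m1 m2 in measurable)
qed




lemma holder_sum:
  fixes x y :: "'a \<Rightarrow> real"
  assumes fin: "finite I" and p: "p > 1" and q: "q > 1" and pq: "1/p + 1/q = 1"
    and x: "\<And>i. i \<in> I \<Longrightarrow> x i \<ge> 0" and y: "\<And>i. i \<in> I \<Longrightarrow> y i \<ge> 0"
  shows "(\<Sum>i\<in>I. x i * y i) \<le> (\<Sum>i\<in>I. x i powr p) powr (1/p) * (\<Sum>i\<in>I. y i powr q) powr (1/q)"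
proof -
  define A where "A = (\<Sum>i\<in>I. x i powr p)"
  define B where "B = (\<Sum>i\<in>I. y i powr q)"
  have A0: "A \<ge> 0" unfolding A_def by (intro sum_nonneg) auto
  have B0: "B \<ge> 0" unfolding B_def by (intro sum_nonneg) auto
  show ?thesis
  proof (cases "A = 0 \<or> B = 0")
    case True
    then have "(\<forall>i\<in>I. x i = 0) \<or> (\<forall>i\<in>I. y i = 0)"
      unfolding A_def B_def using fin by (auto simp: sum_nonneg_eq_0_iff)
    then have "(\<Sum>i\<in>I. x i * y i) = 0" by auto
    moreover have "0 \<le> (\<Sum>i\<in>I. x i powr p) powr (1/p) * (\<Sum>i\<in>I. y i powr q) powr (1/q)" by simp
    ultimately show ?thesis by simp
  next
    case False
    then have Ap: "A > 0" and Bp: "B > 0" using A0 B0 by auto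
    define \<alpha> where "\<alpha> = A powr (1/p)"
    define \<beta> where "\<beta> = B powr (1/q)"
    have ap: "\<alpha> > 0" "\<beta> > 0" unfolding \<alpha>_def \<beta>_def using Ap Bp by auto
    have ap2: "\<alpha> powr p = A" "\<beta> powr q = B" unfolding \<alpha>_def \<beta>_def using Ap Bp p q by (auto simp: powr_powr)
    have "x i / \<alpha> * (y i / \<beta>) \<le> x i powr p / (p * A) + y i powr q / (q * B)" if "i \<in> I" for i
    proof -
      have n1: "x i / \<alpha> \<ge> 0" "y i / \<beta> \<ge> 0" using x[OF that] y[OF that] ap by auto
      have "x i / \<alpha> * (y i / \<beta>) \<le> (x i / \<alpha>) powr p / p + (y i / \<beta>) powr q / q"
        using Youngs_inequality[OF p q pq n1] .
      also have "\<dots> = x i powr p / (p * A) + y i powr q / (q * B)"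
        using ap ap2 by (simp add: powr_divide x[OF that] y[OF that] mult.commute)
      finally show ?thesis .
    qed
    then have "(\<Sum>i\<in>I. x i / \<alpha> * (y i / \<beta>)) \<le> (\<Sum>i\<in>I. x i powr p / (p * A) + y i powr q / (q * B))"
      by (rule sum_mono)
    also have "\<dots> = A / (p * A) + B / (q * B)"
      unfolding A_def B_def by (simp add: sum.distrib sum_divide_distrib)
    also have "\<dots> = 1" using Ap Bp p q pq by simp
    finally have "(\<Sum>i\<in>I. x i * y i) / (\<alpha> * \<beta>) \<le> 1"
      by (simp add: sum_divide_distrib)
    then have "(\<Sum>i\<in>I. x i * y i) \<le> \<alpha> * \<beta>" using ap by (simp add: divide_le_eq)
    then show ?thesis unfolding \<alpha>_def \<beta>_def A_def B_def .
  qed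
qed

lemma wholder:
  fixes a w :: "'a \<Rightarrow> real"
  assumes fin: "finite I" and p: "p \<ge> 1" and a: "\<And>i. i \<in> I \<Longrightarrow> a i \<ge> 0"
    and w: "\<And>i. i \<in> I \<Longrightarrow> 0 \<le> w i \<and> w i \<le> M" and W: "(\<Sum>i\<in>I. w i) \<le> W"
    and M: "M > 0" and Wp: "W > 0"
  shows "(\<Sum>i\<in>I. a i * w i) \<le> (\<Sum>i\<in>I. a i powr p) powr (1/p) * M powr (1/p) * W powr (1 - 1/p)"
proof (cases "p = 1")
  case True
  have "(\<Sum>i\<in>I. a i * w i) \<le> (\<Sum>i\<in>I. a i * M)" by (intro sum_mono mult_left_mono) (use a w in auto)
  also have "\<dots> = (\<Sum>i\<in>I. a i) * M" by (simp add: sum_distrib_right)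
  also have "(\<Sum>i\<in>I. a i) = (\<Sum>i\<in>I. a i powr p)" using True a by (intro sum.cong) auto
  finally show ?thesis using True M Wp a by (simp add: sum_nonneg abs_of_nonneg)
next
  case False
  then have p1: "p > 1" using p by simp
  define q where "q = p / (p - 1)"
  have q1: "q > 1" unfolding q_def using p1 by simp
  have pq: "1/p + 1/q = 1" unfolding q_def using p1 by (simp add: field_simps)
  have iq: "1/q = 1 - 1/p" using pq by simp
  have "(\<Sum>i\<in>I. a i * w i) = (\<Sum>i\<in>I. (a i * w i powr (1/p)) * w i powr (1/q))"
  proof (intro sum.cong refl)
    fix i assume "i \<in> I"
    have "w i powr (1/p) * w i powr (1/q) = w i powr (1/p + 1/q)" by (simp add: powr_add)
    also have "\<dots> = w i" using pq w[OF \<open>i \<in> I\<close>] by simp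
    finally show "a i * w i = (a i * w i powr (1/p)) * w i powr (1/q)" by (simp add: mult.assoc)
  qed
  also have "\<dots> \<le> (\<Sum>i\<in>I. (a i * w i powr (1/p)) powr p) powr (1/p) * (\<Sum>i\<in>I. (w i powr (1/q)) powr q) powr (1/q)"
    by (rule holder_sum[OF fin p1 q1 pq]) (use a w in auto)
  also have "\<dots> \<le> ((\<Sum>i\<in>I. a i powr p) * M) powr (1/p) * W powr (1/q)"
  proof (rule mult_mono)
    have e1: "(\<Sum>i\<in>I. (a i * w i powr (1/p)) powr p) = (\<Sum>i\<in>I. a i powr p * w i)"
      using p1 w a by (intro sum.cong refl) (auto simp: powr_powr powr_mult)
    have "(\<Sum>i\<in>I. a i powr p * w i) \<le> (\<Sum>i\<in>I. a i powr p * M)"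
      by (intro sum_mono mult_left_mono) (use w in auto)
    also have "(\<Sum>i\<in>I. a i powr p * M) = (\<Sum>i\<in>I. a i powr p) * M" by (simp add: sum_distrib_right)
    finally have "(\<Sum>i\<in>I. (a i * w i powr (1/p)) powr p) \<le> (\<Sum>i\<in>I. a i powr p) * M" using e1 by simp
    moreover have "0 \<le> (\<Sum>i\<in>I. (a i * w i powr (1/p)) powr p)" by (intro sum_nonneg) auto
    ultimately show "(\<Sum>i\<in>I. (a i * w i powr (1/p)) powr p) powr (1/p) \<le> ((\<Sum>i\<in>I. a i powr p) * M) powr (1/p)"
      using p1 by (intro powr_mono2) auto
    have e2: "(\<Sum>i\<in>I. (w i powr (1/q)) powr q) = (\<Sum>i\<in>I. w i)"
      using q1 w by (intro sum.cong refl) (auto simp: powr_powr)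
    have "0 \<le> (\<Sum>i\<in>I. w i)" using w by (intro sum_nonneg) auto
    then show "(\<Sum>i\<in>I. (w i powr (1/q)) powr q) powr (1/q) \<le> W powr (1/q)"
      unfolding e2 using W q1 by (intro powr_mono2) auto
  qed auto
  finally show ?thesis using iq by (simp add: powr_mult)
qed




definition IS :: "nat \<Rightarrow> ('n::finite \<Rightarrow> nat) \<Rightarrow> ('n \<Rightarrow> nat) set" where
  "IS b j = {i. \<forall>l. i l \<in> nabla b (j l)}"
definition KS :: "nat \<Rightarrow> ('n::finite \<Rightarrow> nat) \<Rightarrow> ('n \<Rightarrow> nat) set" where
  "KS b j = {k. \<forall>l. k l \<in> Delta b (j l)}"

lemma haar_index_prod: "haar_index b j = IS b j \<times> KS b j"
  unfolding haar_index_def IS_def KS_def by auto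

lemma finite_nabla: "finite (nabla b j)" unfolding nabla_def by auto
lemma finite_Delta: "finite (Delta b j)" unfolding Delta_def by auto

lemma finite_IS: "finite (IS b j)"
proof -
  have "IS b j = PiE UNIV (\<lambda>l. nabla b (j l))" unfolding IS_def by (auto simp: PiE_UNIV_domain Pi_def)
  then show ?thesis using finite_nabla by (simp add: finite_PiE)
qed

lemma finite_KS: "finite (KS b j)"
proof -
  have "KS b j = PiE UNIV (\<lambda>l. Delta b (j l))" unfolding KS_def by (auto simp: PiE_UNIV_domain Pi_def)
  then show ?thesis using finite_Delta by (simp add: finite_PiE)
qed

lemma card_IS: "b \<ge> 1 \<Longrightarrow> card (IS b (j::'n::finite \<Rightarrow> nat)) \<le> b ^ CARD('n)"
proof -
  assume b: "b \<ge> 1"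
  have "IS b j = PiE UNIV (\<lambda>l. nabla b (j l))" unfolding IS_def by (auto simp: PiE_UNIV_domain Pi_def)
  then have "card (IS b j) = (\<Prod>l\<in>UNIV. card (nabla b (j l)))" by (simp add: card_PiE)
  also have "\<dots> \<le> (\<Prod>l\<in>(UNIV::'n set). b)" by (intro prod_mono) (use b in \<open>auto simp: nabla_def\<close>)
  finally show ?thesis by simp
qed

lemma zero_in_index: "b \<ge> 1 \<Longrightarrow> ((\<lambda>_. 0), (\<lambda>_. 0)) \<in> haar_index b j"
  unfolding haar_index_def nabla_def Delta_def by auto

lemma finite_haar_index: "finite (haar_index b j)"
  unfolding haar_index_prod by (intro finite_cartesian_product finite_IS finite_KS)

lemma real_ereal_ge1: "p \<ge> 1 \<Longrightarrow> p \<noteq> \<infinity> \<Longrightarrow> real_of_ereal p \<ge> 1"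
  by (cases p) auto

lemma einv_range: "p \<ge> 1 \<Longrightarrow> 0 \<le> einv p \<and> einv p \<le> 1"
proof -
  assume p: "p \<ge> 1"
  show ?thesis
  proof (cases "p = \<infinity>")
    case True then show ?thesis unfolding einv_def by simp
  next
    case False
    then have "real_of_ereal p \<ge> 1" using p real_ereal_ge1 by blast
    then show ?thesis unfolding einv_def using False by simp
  qed
qed

lemma level_norm_nonneg:
  assumes "b \<ge> 1"
  shows "level_norm b p f j \<ge> 0"
proof (cases "p = \<infinity>")
  case True
  have "\<bar>haar_coeff b f j (\<lambda>_. 0) (\<lambda>_. 0)\<bar> \<le> Max ((\<lambda>(i, k). \<bar>haar_coeff b f j i k\<bar>) ` haar_index b j)"
  proof -
    have "(\<lambda>(i, k). \<bar>haar_coeff b f j i k\<bar>) ((\<lambda>_. 0), (\<lambda>_. 0)) \<in> (\<lambda>(i, k). \<bar>haar_coeff b f j i k\<bar>) ` haar_index b j"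
      using zero_in_index[OF assms, of j] by (intro imageI)
    then have "(\<lambda>(i, k). \<bar>haar_coeff b f j i k\<bar>) ((\<lambda>_. 0), (\<lambda>_. 0)) \<le> Max ((\<lambda>(i, k). \<bar>haar_coeff b f j i k\<bar>) ` haar_index b j)"
      by (rule Max_ge[OF finite_imageI[OF finite_haar_index]])
    then show ?thesis by simp
  qed
  then have "0 \<le> Max ((\<lambda>(i, k). \<bar>haar_coeff b f j i k\<bar>) ` haar_index b j)" by (meson abs_ge_zero order_trans)
  then show ?thesis unfolding level_norm_def using True by simp
next
  case False
  then show ?thesis unfolding level_norm_def by simp
qed

lemma level_holder:
  fixes j :: "'n::finite \<Rightarrow> nat" and w :: "('n \<Rightarrow> nat) \<times> ('n \<Rightarrow> nat) \<Rightarrow> real"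
  assumes b: "b \<ge> 2" and p: "p \<ge> 1"
    and w: "\<And>ik. ik \<in> haar_index b j \<Longrightarrow> 0 \<le> w ik \<and> w ik \<le> M"
    and W: "(\<Sum>ik\<in>haar_index b j. w ik) \<le> W" and M: "M > 0" and Wp: "W > 0"
  shows "(\<Sum>ik\<in>haar_index b j. \<bar>haar_coeff b f j (fst ik) (snd ik)\<bar> * w ik)
           \<le> level_norm b p f j * M powr einv p * W powr (1 - einv p)"
proof (cases "p = \<infinity>")
  case True
  define Mx where "Mx = Max ((\<lambda>(i, k). \<bar>haar_coeff b f j i k\<bar>) ` haar_index b j)"
  have "(\<Sum>ik\<in>haar_index b j. \<bar>haar_coeff b f j (fst ik) (snd ik)\<bar> * w ik) \<le> (\<Sum>ik\<in>haar_index b j. Mx * w ik)"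
  proof (intro sum_mono mult_right_mono)
    fix ik assume ik: "ik \<in> haar_index b j"
    show "\<bar>haar_coeff b f j (fst ik) (snd ik)\<bar> \<le> Mx"
    proof -
      have "(\<lambda>(i, k). \<bar>haar_coeff b f j i k\<bar>) ik \<in> (\<lambda>(i, k). \<bar>haar_coeff b f j i k\<bar>) ` haar_index b j"
        using ik by (rule imageI)
      then have "(\<lambda>(i, k). \<bar>haar_coeff b f j i k\<bar>) ik \<le> Mx"
        unfolding Mx_def by (rule Max_ge[OF finite_imageI[OF finite_haar_index]])
      then show ?thesis by (simp add: case_prod_beta)
    qed
    show "0 \<le> w ik" using w ik by auto
  qed
  also have "\<dots> = Mx * (\<Sum>ik\<in>haar_index b j. w ik)" by (simp add: sum_distrib_left)
  also have "\<dots> \<le> Mx * W"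
  proof (rule mult_left_mono[OF W])
    have "\<bar>haar_coeff b f j (\<lambda>_. 0) (\<lambda>_. 0)\<bar> \<le> Mx"
    proof -
      have "(\<lambda>(i, k). \<bar>haar_coeff b f j i k\<bar>) ((\<lambda>_. 0), (\<lambda>_. 0)) \<in> (\<lambda>(i, k). \<bar>haar_coeff b f j i k\<bar>) ` haar_index b j"
        using zero_in_index[of b j] b by (intro imageI) simp
      then have "(\<lambda>(i, k). \<bar>haar_coeff b f j i k\<bar>) ((\<lambda>_. 0), (\<lambda>_. 0)) \<le> Mx"
        unfolding Mx_def by (rule Max_ge[OF finite_imageI[OF finite_haar_index]])
      then show ?thesis by simp
    qed
    then show "0 \<le> Mx" by (meson abs_ge_zero order_trans)
  qed
  finally show ?thesis using True M Wp unfolding level_norm_def einv_def Mx_def by simp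
next
  case False
  define pp where "pp = real_of_ereal p"
  have pp: "pp \<ge> 1" using p False real_ereal_ge1 unfolding pp_def by blast
  have "(\<Sum>ik\<in>haar_index b j. \<bar>haar_coeff b f j (fst ik) (snd ik)\<bar> * w ik)
     \<le> (\<Sum>ik\<in>haar_index b j. \<bar>haar_coeff b f j (fst ik) (snd ik)\<bar> powr pp) powr (1/pp) * M powr (1/pp) * W powr (1 - 1/pp)"
    by (rule wholder[OF finite_haar_index pp _ w W M Wp]) auto
  also have "(\<Sum>ik\<in>haar_index b j. \<bar>haar_coeff b f j (fst ik) (snd ik)\<bar> powr pp) =
      (\<Sum>(i, k)\<in>haar_index b j. \<bar>haar_coeff b f j i k\<bar> powr real_of_ereal p)"
    unfolding pp_def by (simp add: case_prod_beta)
  finally show ?thesis using False unfolding level_norm_def einv_def pp_def by simp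
qed

lemma sum_haar_index_cnt:
  fixes j :: "'n::finite \<Rightarrow> nat" and P :: "(real^'n) set"
  assumes b: "b \<ge> 1" and fin: "finite P"
  shows "(\<Sum>ik\<in>haar_index b j. real (cnt b P d (snd ik))) \<le> real (b ^ CARD('n)) * real (card P)"
proof -
  have "(\<Sum>ik\<in>haar_index b j. real (cnt b P d (snd ik))) = (\<Sum>i\<in>IS b j. \<Sum>k\<in>KS b j. real (cnt b P d k))"
  proof -
    have "(\<Sum>i\<in>IS b j. \<Sum>k\<in>KS b j. real (cnt b P d k)) = (\<Sum>(i,k)\<in>IS b j \<times> KS b j. real (cnt b P d k))"
      by (rule sum.cartesian_product)
    also have "\<dots> = (\<Sum>ik\<in>IS b j \<times> KS b j. real (cnt b P d (snd ik)))" by (simp add: case_prod_beta)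
    finally show ?thesis unfolding haar_index_prod by simp
  qed
  also have "\<dots> = real (card (IS b j)) * (\<Sum>k\<in>KS b j. real (cnt b P d k))" by simp
  also have "\<dots> \<le> real (b ^ CARD('n)) * real (card P)"
  proof (rule mult_mono)
    show "real (card (IS b j)) \<le> real (b ^ CARD('n))" using card_IS[OF b, of j] by linarith
    have "(\<Sum>k\<in>KS b j. cnt b P d k) \<le> card P" by (rule cnt_sum_le[OF fin finite_KS])
    moreover have e: "(\<Sum>k\<in>KS b j. real (cnt b P d k)) = real (\<Sum>k\<in>KS b j. cnt b P d k)" by simp
    ultimately show "(\<Sum>k\<in>KS b j. real (cnt b P d k)) \<le> real (card P)" by (simp only: e of_nat_le_iff)
  qed (auto intro: sum_nonneg)
  finally show ?thesis .
qed

lemma inner_bound: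
  fixes j :: "'n::finite \<Rightarrow> nat" and P :: "(real^'n) set"
  assumes b: "b \<ge> 2" and p: "p \<ge> 1" and fin: "finite P" and ne: "P \<noteq> {}" and M: "M > 0"
    and cM: "\<And>k. k \<in> KS b j \<Longrightarrow> real (cnt b P (\<lambda>l. j l - 1) k) \<le> M"
  shows "(\<Sum>ik\<in>haar_index b j. \<bar>haar_coeff b f j (fst ik) (snd ik)\<bar> * real (cnt b P (\<lambda>l. j l - 1) (snd ik)))
     \<le> level_norm b p f j * M powr einv p * (real (b ^ CARD('n)) * real (card P)) powr (1 - einv p)"
proof (rule level_holder[where w="\<lambda>ik. real (cnt b P (\<lambda>l. j l - 1) (snd ik))", OF b p _ _ M])
  show "0 \<le> real (cnt b P (\<lambda>l. j l - 1) (snd ik)) \<and> real (cnt b P (\<lambda>l. j l - 1) (snd ik)) \<le> M"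
    if "ik \<in> haar_index b j" for ik using cM that unfolding haar_index_prod by auto
  show "(\<Sum>ik\<in>haar_index b j. real (cnt b P (\<lambda>l. j l - 1) (snd ik))) \<le> real (b ^ CARD('n)) * real (card P)"
    using sum_haar_index_cnt[where b=b and P=P and j=j and d="\<lambda>l. j l - 1"] b fin by simp
  show "0 < real (b ^ CARD('n)) * real (card P)" using b fin ne by (simp add: card_gt_0_iff)
qed




lemma sum_jm1:
  fixes j :: "'n::finite \<Rightarrow> nat"
  shows "sum j UNIV \<le> sum (\<lambda>l. j l - 1) UNIV + CARD('n)"
proof -
  have "sum j UNIV \<le> (\<Sum>l\<in>UNIV. (j l - 1) + 1)" by (intro sum_mono) simp
  also have "\<dots> = sum (\<lambda>l. j l - 1) UNIV + CARD('n)" by (subst sum.distrib) simp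
  finally show ?thesis .
qed

lemma KS_lt:
  assumes "k \<in> KS b j"
  shows "\<forall>l. k l < b ^ (j l - 1)"
  using assms unfolding KS_def Delta_def by (auto split: if_splits)

lemma powr_le_self:
  fixes x e :: real
  assumes "x \<ge> 1" "0 \<le> e" "e \<le> 1"
  shows "x powr e \<le> x"
proof -
  have "x powr e \<le> x powr 1" using assms by (intro powr_mono) (auto simp del: powr_one')
  then show ?thesis using assms by simp
qed

lemma LB_main:
  fixes j :: "'n::finite \<Rightarrow> nat" and P :: "(real^'n) set"
  assumes net: "is_net b t m P" and b: "b \<ge> 2" and p: "p \<ge> 1" and jm: "m - t < sum j UNIV"
  shows "(\<Sum>ik\<in>haar_index b j. \<bar>haar_coeff b f j (fst ik) (snd ik)\<bar> * (real b powr (real (sum j UNIV) / 2) * real (cnt b P (\<lambda>l. j l - 1) (snd ik))))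
     \<le> real b powr (real (sum j UNIV) / 2) * (level_norm b p f j * (real b ^ (t + 2 * CARD('n)) * real b powr (real m * (1 - einv p))))"
proof -
  define s where "s = CARD('n)"
  define B where "B = real b powr (real (sum j UNIV) / 2)"
  have fin: "finite P" using net unfolding is_net_def by auto
  have cardP: "card P = b ^ m" by (rule net_card[OF net b])
  have ne: "P \<noteq> {}" using cardP b by auto
  have ip: "0 \<le> einv p" "einv p \<le> 1" using einv_range[OF p] by auto
  have cM: "real (cnt b P (\<lambda>l. j l - 1) k) \<le> real b ^ (t + s)" if "k \<in> KS b j" for k
  proof -
    have "cnt b P (\<lambda>l. j l - 1) k \<le> b ^ (t + (m - t - sum (\<lambda>l. j l - 1) UNIV))"
      by (rule net_count_upper[OF net b KS_lt[OF that]])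
    also have "\<dots> \<le> b ^ (t + s)"
    proof (rule power_increasing)
      show "t + (m - t - sum (\<lambda>l. j l - 1) UNIV) \<le> t + s" using sum_jm1[of j] jm unfolding s_def by linarith
    qed (use b in auto)
    finally show ?thesis by (metis of_nat_le_iff of_nat_power)
  qed
  have "(\<Sum>ik\<in>haar_index b j. \<bar>haar_coeff b f j (fst ik) (snd ik)\<bar> * (B * real (cnt b P (\<lambda>l. j l - 1) (snd ik))))
      = B * (\<Sum>ik\<in>haar_index b j. \<bar>haar_coeff b f j (fst ik) (snd ik)\<bar> * real (cnt b P (\<lambda>l. j l - 1) (snd ik)))"
    by (simp add: sum_distrib_left mult.left_commute)
  also have "\<dots> \<le> B * (level_norm b p f j * (real b ^ (t + s)) powr einv p * (real (b ^ s) * real (card P)) powr (1 - einv p))"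
    unfolding s_def B_def
    by (intro mult_left_mono inner_bound[OF b p fin ne]) (use b cM[unfolded s_def] in auto)
  also have "\<dots> \<le> B * (level_norm b p f j * (real b ^ (t + 2 * s) * real b powr (real m * (1 - einv p))))"
  proof (intro mult_left_mono)
    have ln0: "level_norm b p f j \<ge> 0" using b by (intro level_norm_nonneg) simp
    have a1: "(real b ^ (t + s)) powr einv p \<le> real b ^ (t + s)"
      using b ip by (intro powr_le_self) (auto simp: one_le_power)
    have "(real (b ^ s) * real (card P)) powr (1 - einv p) = (real b ^ s) powr (1 - einv p) * (real b ^ m) powr (1 - einv p)"
      using cardP by (simp add: powr_mult)
    also have "(real b ^ m) powr (1 - einv p) = real b powr (real m * (1 - einv p))"
      using b by (simp add: powr_realpow[symmetric] powr_powr)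
    also have "(real b ^ s) powr (1 - einv p) \<le> real b ^ s"
      using b ip by (intro powr_le_self) (auto simp: one_le_power)
    finally have a2: "(real (b ^ s) * real (card P)) powr (1 - einv p) \<le> real b ^ s * real b powr (real m * (1 - einv p))"
      by (simp add: mult_right_mono)
    have "(real b ^ (t + s)) powr einv p * (real (b ^ s) * real (card P)) powr (1 - einv p)
        \<le> real b ^ (t + s) * (real b ^ s * real b powr (real m * (1 - einv p)))"
      by (intro mult_mono a1 a2) auto
    also have "\<dots> = real b ^ (t + 2 * s) * real b powr (real m * (1 - einv p))"
      by (simp add: power_add mult_2)
    finally show "level_norm b p f j * (real b ^ (t + s)) powr einv p * (real (b ^ s) * real (card P)) powr (1 - einv p)
        \<le> level_norm b p f j * (real b ^ (t + 2 * s) * real b powr (real m * (1 - einv p)))"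
      using ln0 by (simp add: mult.assoc mult_left_mono)
    show "0 \<le> B" unfolding B_def by simp
  qed
  finally show ?thesis unfolding B_def s_def .
qed

lemma LB_point:
  fixes j :: "'n::finite \<Rightarrow> nat" and x :: "real^'n"
  assumes b: "b \<ge> 2" and p: "p \<ge> 1"
  shows "(\<Sum>ik\<in>haar_index b j. \<bar>haar_coeff b f j (fst ik) (snd ik)\<bar> * (real b powr (real (sum j UNIV) / 2) * real (cnt b {x} (\<lambda>l. j l - 1) (snd ik))))
     \<le> real b powr (real (sum j UNIV) / 2) * (level_norm b p f j * real b ^ CARD('n))"
proof -
  define s where "s = CARD('n)"
  define B where "B = real b powr (real (sum j UNIV) / 2)"
  have ip: "0 \<le> einv p" "einv p \<le> 1" using einv_range[OF p] by auto
  have cM: "real (cnt b {x} (\<lambda>l. j l - 1) k) \<le> 1" for k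
  proof -
    have "cnt b {x} (\<lambda>l. j l - 1) k \<le> card {x}" unfolding cnt_def by (rule card_mono) auto
    then show ?thesis by simp
  qed
  have "(\<Sum>ik\<in>haar_index b j. \<bar>haar_coeff b f j (fst ik) (snd ik)\<bar> * (B * real (cnt b {x} (\<lambda>l. j l - 1) (snd ik))))
      = B * (\<Sum>ik\<in>haar_index b j. \<bar>haar_coeff b f j (fst ik) (snd ik)\<bar> * real (cnt b {x} (\<lambda>l. j l - 1) (snd ik)))"
    by (simp add: sum_distrib_left mult.left_commute)
  also have "\<dots> \<le> B * (level_norm b p f j * 1 powr einv p * (real (b ^ s) * real (card {x})) powr (1 - einv p))"
    unfolding s_def B_def
    by (intro mult_left_mono inner_bound[OF b p]) (use b cM in auto)
  also have "\<dots> \<le> B * (level_norm b p f j * real b ^ s)"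
  proof (intro mult_left_mono)
    have ln0: "level_norm b p f j \<ge> 0" using b by (intro level_norm_nonneg) simp
    have "(real (b ^ s) * real (card {x})) powr (1 - einv p) \<le> real b ^ s"
      using b ip by simp (intro powr_le_self, auto simp: one_le_power)
    then show "level_norm b p f j * 1 powr einv p * (real (b ^ s) * real (card {x})) powr (1 - einv p) \<le> level_norm b p f j * real b ^ s"
      using ln0 by (simp add: mult_left_mono)
    show "0 \<le> B" unfolding B_def by simp
  qed
  finally show ?thesis unfolding B_def s_def .
qed




definition JL :: "nat \<Rightarrow> ('n::finite \<Rightarrow> nat) set" where
  "JL L = {j. sum j UNIV = L}"

lemma JL_sub: "(JL L :: ('n::finite \<Rightarrow> nat) set) \<subseteq> PiE UNIV (\<lambda>_. {0..L})"
proof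
  fix j :: "'n \<Rightarrow> nat" assume "j \<in> JL L"
  then have "j l \<le> L" for l unfolding JL_def using member_le_sum[of l UNIV j] by auto
  then show "j \<in> PiE UNIV (\<lambda>_. {0..L})" by (auto simp: PiE_UNIV_domain)
qed

lemma finite_JL: "finite (JL L :: ('n::finite \<Rightarrow> nat) set)"
  by (rule finite_subset[OF JL_sub]) (simp add: finite_PiE)

lemma card_JL: "card (JL L :: ('n::finite \<Rightarrow> nat) set) \<le> (L + 1) ^ (CARD('n) - 1)"
proof -
  obtain l0 :: 'n where True by blast
  define r where "r j = restrict j (UNIV - {l0})" for j :: "'n \<Rightarrow> nat"
  have inj: "inj_on r (JL L :: ('n \<Rightarrow> nat) set)"
  proof (rule inj_onI)
    fix j1 j2 assume j1: "j1 \<in> JL L" and j2: "j2 \<in> JL L" and e: "r j1 = r j2"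
    have o: "j1 l = j2 l" if "l \<noteq> l0" for l
      using fun_cong[OF e, of l] that unfolding r_def by simp
    have s1: "sum j1 UNIV = j1 l0 + sum j1 (UNIV - {l0})" by (simp add: sum.remove)
    have s2: "sum j2 UNIV = j2 l0 + sum j2 (UNIV - {l0})" by (simp add: sum.remove)
    have "sum j1 (UNIV - {l0}) = sum j2 (UNIV - {l0})" using o by (intro sum.cong) auto
    then have "j1 l0 = j2 l0" using s1 s2 j1 j2 unfolding JL_def by simp
    then show "j1 = j2" using o by (metis ext)
  qed
  have img: "r ` (JL L :: ('n \<Rightarrow> nat) set) \<subseteq> PiE (UNIV - {l0}) (\<lambda>_. {0..L})"
  proof
    fix y assume "y \<in> r ` JL L"
    then obtain j where j: "j \<in> JL L" "y = r j" by auto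
    then have "j \<in> PiE UNIV (\<lambda>_. {0..L})" using JL_sub by blast
    then show "y \<in> PiE (UNIV - {l0}) (\<lambda>_. {0..L})" unfolding j(2) r_def by (auto simp: PiE_UNIV_domain)
  qed
  have "card (JL L :: ('n \<Rightarrow> nat) set) \<le> card (PiE (UNIV - {l0}) (\<lambda>_. {0..L}))"
    using card_inj_on_le[OF inj img] by (simp add: finite_PiE)
  also have "\<dots> = (L + 1) ^ (CARD('n) - 1)" by (simp add: card_PiE card_Diff_singleton)
  finally show ?thesis .
qed

lemma summable_poly_geom:
  fixes x :: real
  assumes x: "0 \<le> x" "x < 1"
  shows "summable (\<lambda>r. real (r + 1) ^ n * x ^ r)"
proof (cases "x = 0")
  case True
  have "summable (\<lambda>r. if r = 0 then (1::real) else 0)" by simp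
  moreover have "(\<lambda>r. real (r + 1) ^ n * x ^ r) = (\<lambda>r. if r = 0 then (1::real) else 0)"
    using True by (auto simp: fun_eq_iff)
  ultimately show ?thesis by simp
next
  case False
  then have xp: "x > 0" using x by simp
  define c where "c = (1 + x) / 2"
  have c1: "c < 1" unfolding c_def using x by simp
  have lim0: "(\<lambda>r. (real r + 2) / (real r + 1)) \<longlonglongrightarrow> 1" by real_asymp
  have lim: "(\<lambda>r. ((real r + 2) / (real r + 1)) ^ n) \<longlonglongrightarrow> 1"
    using tendsto_power[OF lim0, of n] by simp
  have "1 < c / x" unfolding c_def using xp x by (simp add: field_simps)
  then have "eventually (\<lambda>r. ((real r + 2) / (real r + 1)) ^ n < c / x) sequentially"
    using order_tendstoD(2)[OF lim] by blast
  then obtain N where N: "\<And>r. r \<ge> N \<Longrightarrow> ((real r + 2) / (real r + 1)) ^ n < c / x"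
    unfolding eventually_sequentially by blast
  show ?thesis
  proof (rule summable_ratio_test[OF c1, of N])
    fix r assume r: "r \<ge> N"
    have q: "((real r + 2) / (real r + 1)) ^ n * x \<le> c"
      using N[OF r] xp by (simp add: field_simps)
    have "real (Suc r + 1) ^ n * x ^ Suc r = (((real r + 2) / (real r + 1)) ^ n * x) * (real (r + 1) ^ n * x ^ r)"
      by (simp add: power_divide field_simps)
    also have "\<dots> \<le> c * (real (r + 1) ^ n * x ^ r)"
      by (rule mult_right_mono[OF q]) (use x in simp)
    finally show "norm (real (Suc r + 1) ^ n * x ^ Suc r) \<le> c * norm (real (r + 1) ^ n * x ^ r)"
      using x by simp
  qed
qed

definition Kc :: "nat \<Rightarrow> real \<Rightarrow> nat \<Rightarrow> real" where
  "Kc b \<gamma> n = suminf (\<lambda>r. real (r + 1) ^ n * (real b powr (-\<gamma>)) ^ r)"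

lemma GS:
  fixes J :: "('n::finite \<Rightarrow> nat) set"
  assumes b: "b \<ge> 2" and g: "\<gamma> > 0" and fin: "finite J" and L0: "\<And>j. j \<in> J \<Longrightarrow> sum j UNIV \<ge> L0"
  shows "(\<Sum>j\<in>J. real b powr (-\<gamma> * real (sum j UNIV)))
          \<le> Kc b \<gamma> (CARD('n) - 1) * real (L0 + 1) ^ (CARD('n) - 1) * real b powr (-\<gamma> * real L0)"
proof -
  define s1 where "s1 = CARD('n) - 1"
  define x where "x = real b powr (-\<gamma>)"
  define h where "h r = real (r + 1) ^ s1 * x ^ r" for r
  have x: "0 \<le> x" "x < 1" unfolding x_def using b g by (auto intro!: powr_less_one)
  have summ: "summable h" unfolding h_def by (rule summable_poly_geom[OF x])
  define T where "T = (\<lambda>j. sum j UNIV) ` J"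
  have finT: "finite T" unfolding T_def using fin by simp
  have TL: "\<And>L. L \<in> T \<Longrightarrow> L \<ge> L0" unfolding T_def using L0 by auto
  have pw: "real b powr (-\<gamma> * real L) = real b powr (-\<gamma> * real L0) * x ^ (L - L0)" if "L \<ge> L0" for L
  proof -
    have "x ^ (L - L0) = real b powr (-\<gamma> * real (L - L0))"
      unfolding x_def using b by (simp add: powr_realpow[symmetric] powr_powr mult.commute)
    also have "real (L - L0) = real L - real L0" using that by simp
    finally show ?thesis using b by (simp add: powr_add[symmetric] algebra_simps)
  qed
  have "(\<Sum>j\<in>J. real b powr (-\<gamma> * real (sum j UNIV)))
      = (\<Sum>L\<in>T. \<Sum>j\<in>{j. j \<in> J \<and> sum j UNIV = L}. real b powr (-\<gamma> * real (sum j UNIV)))"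
    unfolding T_def by (rule sum.group[symmetric]) (use fin in auto)
  also have "\<dots> = (\<Sum>L\<in>T. real (card {j. j \<in> J \<and> sum j UNIV = L}) * real b powr (-\<gamma> * real L))"
    by (intro sum.cong refl) simp
  also have "\<dots> \<le> (\<Sum>L\<in>T. real (L + 1) ^ s1 * real b powr (-\<gamma> * real L))"
  proof (intro sum_mono mult_right_mono)
    fix L assume "L \<in> T"
    have "card {j. j \<in> J \<and> sum j UNIV = L} \<le> card (JL L :: ('n \<Rightarrow> nat) set)"
      by (rule card_mono[OF finite_JL]) (auto simp: JL_def)
    also have "\<dots> \<le> (L + 1) ^ s1" unfolding s1_def by (rule card_JL)
    finally show "real (card {j. j \<in> J \<and> sum j UNIV = L}) \<le> real (L + 1) ^ s1"
      by (metis of_nat_le_iff of_nat_power)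
  qed simp
  also have "\<dots> \<le> (\<Sum>L\<in>T. real (L0 + 1) ^ s1 * real b powr (-\<gamma> * real L0) * h (L - L0))"
  proof (intro sum_mono)
    fix L assume L: "L \<in> T"
    then have LL: "L \<ge> L0" using TL by simp
    have "real (L + 1) \<le> real (L0 + 1) * real (L - L0 + 1)"
    proof -
      obtain r where r: "L = L0 + r" using LL le_Suc_ex by blast
      have "L + 1 \<le> (L0 + 1) * (L - L0 + 1)" unfolding r by (simp add: algebra_simps)
      then show ?thesis by (metis of_nat_le_iff of_nat_mult)
    qed
    then have "real (L + 1) ^ s1 \<le> (real (L0 + 1) * real (L - L0 + 1)) ^ s1"
      by (intro power_mono) auto
    then have "real (L + 1) ^ s1 * real b powr (-\<gamma> * real L) \<le> (real (L0 + 1) * real (L - L0 + 1)) ^ s1 * real b powr (-\<gamma> * real L)"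
      by (intro mult_right_mono) auto
    also have "\<dots> = real (L0 + 1) ^ s1 * real b powr (-\<gamma> * real L0) * h (L - L0)"
      unfolding h_def pw[OF LL] by (simp add: power_mult_distrib)
    finally show "real (L + 1) ^ s1 * real b powr (-\<gamma> * real L) \<le> real (L0 + 1) ^ s1 * real b powr (-\<gamma> * real L0) * h (L - L0)" .
  qed
  also have "\<dots> = real (L0 + 1) ^ s1 * real b powr (-\<gamma> * real L0) * (\<Sum>L\<in>T. h (L - L0))"
    by (simp add: sum_distrib_left)
  also have "\<dots> \<le> real (L0 + 1) ^ s1 * real b powr (-\<gamma> * real L0) * suminf h"
  proof (rule mult_left_mono)
    have "(\<Sum>L\<in>T. h (L - L0)) = (\<Sum>r\<in>(\<lambda>L. L - L0) ` T. h r)"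
    proof (rule sum.reindex_cong[symmetric])
      show "inj_on (\<lambda>L. L - L0) T"
      proof (rule inj_onI)
        fix L1 L2 assume "L1 \<in> T" "L2 \<in> T" "L1 - L0 = L2 - L0"
        moreover have "L1 \<ge> L0" "L2 \<ge> L0" using TL \<open>L1 \<in> T\<close> \<open>L2 \<in> T\<close> by auto
        ultimately show "L1 = L2" by arith
      qed
    qed auto
    also have "\<dots> \<le> suminf h"
      by (rule sum_le_suminf[OF summ]) (use finT x in \<open>auto simp: h_def\<close>)
    finally show "(\<Sum>L\<in>T. h (L - L0)) \<le> suminf h" .
  qed simp
  also have "suminf h = Kc b \<gamma> (CARD('n) - 1)" unfolding Kc_def h_def x_def s1_def ..
  finally show ?thesis unfolding s1_def by (simp add: mult_ac)
qed




definition C2 :: "nat \<Rightarrow> real \<Rightarrow> ereal \<Rightarrow> ereal \<Rightarrow> nat \<Rightarrow> real" where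
  "C2 b \<alpha> p q s = (if q = \<infinity> then Kc b (\<alpha> - einv p) (s - 1)
     else if q = 1 then 1
     else Kc b ((\<alpha> - einv p) * (real_of_ereal q / (real_of_ereal q - 1))) (s - 1) powr (1 - einv q))"

lemma W_nonneg: "b \<ge> 2 \<Longrightarrow> wav_level_weighted b \<alpha> p f j \<ge> 0"
  unfolding wav_level_weighted_def using level_norm_nonneg[of b p f j] by simp

lemma W_le1_inf:
  assumes "q = \<infinity>" "f \<in> wav_space b \<alpha> p q" "wav_norm b \<alpha> p q f \<le> 1"
  shows "wav_level_weighted b \<alpha> p f j \<le> 1"
proof -
  have "bdd_above (range (wav_level_weighted b \<alpha> p f))" using assms unfolding wav_space_def by simp
  then have "wav_level_weighted b \<alpha> p f j \<le> (SUP j. wav_level_weighted b \<alpha> p f j)" by (rule cSUP_upper[OF UNIV_I])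
  also have "\<dots> \<le> 1" using assms unfolding wav_norm_def by simp
  finally show ?thesis .
qed

lemma wav_term_eq:
  fixes f :: "real^'n::finite \<Rightarrow> real"
  assumes b: "b \<ge> 2" and qq: "real_of_ereal q \<ge> 1"
  shows "wav_term b \<alpha> p q f L = (\<Sum>j\<in>JL L. wav_level_weighted b \<alpha> p f j powr real_of_ereal q)"
proof -
  define qq where "qq = real_of_ereal q"
  define w where "w = \<alpha> - einv p + 1/2"
  have "(\<Sum>j\<in>JL L. wav_level_weighted b \<alpha> p f j powr qq) = (\<Sum>j\<in>JL L. real b powr (qq * w * real L) * level_norm b p f j powr qq)"
  proof (intro sum.cong refl)
    fix j :: "'n \<Rightarrow> nat" assume "j \<in> JL L"
    then have jL: "sum j UNIV = L" unfolding JL_def by simp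
    have ln: "level_norm b p f j \<ge> 0" using b by (intro level_norm_nonneg) simp
    have "wav_level_weighted b \<alpha> p f j powr qq = (real b powr (w * real L)) powr qq * level_norm b p f j powr qq"
      unfolding wav_level_weighted_def w_def jL using ln b by (simp add: powr_mult)
    also have "(real b powr (w * real L)) powr qq = real b powr (qq * w * real L)" by (simp add: powr_powr mult_ac)
    finally show "wav_level_weighted b \<alpha> p f j powr qq = real b powr (qq * w * real L) * level_norm b p f j powr qq" .
  qed
  also have "\<dots> = wav_term b \<alpha> p q f L"
    unfolding wav_term_def qq_def w_def JL_def by (simp add: sum_distrib_left)
  finally show ?thesis unfolding qq_def by simp
qed

lemma Wq_sum_le:
  fixes f :: "real^'n::finite \<Rightarrow> real" and J :: "('n \<Rightarrow> nat) set"
  assumes b: "b \<ge> 2" and q: "q \<ge> 1" "q \<noteq> \<infinity>" and f: "f \<in> wav_space b \<alpha> p q"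
    and nf: "wav_norm b \<alpha> p q f \<le> 1" and fin: "finite J"
  shows "(\<Sum>j\<in>J. wav_level_weighted b \<alpha> p f j powr real_of_ereal q) \<le> 1"
proof -
  define qq where "qq = real_of_ereal q"
  have qq: "qq \<ge> 1" unfolding qq_def using q real_ereal_ge1 by blast
  have summ: "summable (wav_term b \<alpha> p q f)" using f q unfolding wav_space_def by simp
  have wt: "wav_term b \<alpha> p q f L = (\<Sum>j\<in>JL L. wav_level_weighted b \<alpha> p f j powr qq)" for L
    unfolding qq_def by (rule wav_term_eq[OF b]) (use qq qq_def in simp)
  have wt0: "wav_term b \<alpha> p q f L \<ge> 0" for L unfolding wt by (intro sum_nonneg) simp
  define T where "T = (\<lambda>j. sum j UNIV) ` J"
  have "(\<Sum>j\<in>J. wav_level_weighted b \<alpha> p f j powr qq)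
      = (\<Sum>L\<in>T. \<Sum>j\<in>{j. j \<in> J \<and> sum j UNIV = L}. wav_level_weighted b \<alpha> p f j powr qq)"
    unfolding T_def by (rule sum.group[symmetric]) (use fin in auto)
  also have "\<dots> \<le> (\<Sum>L\<in>T. wav_term b \<alpha> p q f L)"
  proof (intro sum_mono)
    fix L assume "L \<in> T"
    show "(\<Sum>j\<in>{j. j \<in> J \<and> sum j UNIV = L}. wav_level_weighted b \<alpha> p f j powr qq) \<le> wav_term b \<alpha> p q f L"
      unfolding wt by (rule sum_mono2[OF finite_JL]) (auto simp: JL_def)
  qed
  also have "\<dots> \<le> suminf (wav_term b \<alpha> p q f)"
    by (rule sum_le_suminf[OF summ]) (use fin wt0 T_def in auto)
  also have "\<dots> \<le> 1"
  proof (rule ccontr)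
    assume "\<not> ?thesis"
    then have "1 < suminf (wav_term b \<alpha> p q f)" by simp
    then have "1 powr (1/qq) < suminf (wav_term b \<alpha> p q f) powr (1/qq)"
      using qq by (intro powr_less_mono2) auto
    then have "1 < wav_norm b \<alpha> p q f" unfolding wav_norm_def qq_def using q by simp
    then show False using nf by simp
  qed
  finally show ?thesis unfolding qq_def .
qed

lemma Kc_nonneg:
  assumes b: "b \<ge> 2" and g: "\<gamma> > 0"
  shows "Kc b \<gamma> n \<ge> 0"
proof -
  have x: "0 \<le> real b powr (-\<gamma>)" "real b powr (-\<gamma>) < 1" using b g by (auto intro!: powr_less_one)
  show ?thesis unfolding Kc_def
    by (rule suminf_nonneg[OF summable_poly_geom[OF x]]) simp
qed

lemma outer:
  fixes f :: "real^'n::finite \<Rightarrow> real" and J :: "('n \<Rightarrow> nat) set"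
  assumes b: "b \<ge> 2" and p: "p \<ge> 1" and q: "q \<ge> 1"
    and a1: "q = 1 \<longrightarrow> \<alpha> \<ge> einv p" and a2: "q > 1 \<longrightarrow> \<alpha> > einv p"
    and f: "f \<in> wav_space b \<alpha> p q" and nf: "wav_norm b \<alpha> p q f \<le> 1"
    and fin: "finite J" and L0: "\<And>j. j \<in> J \<Longrightarrow> sum j UNIV \<ge> L0"
  shows "(\<Sum>j\<in>J. real b powr (-(\<alpha> - einv p) * real (sum j UNIV)) * wav_level_weighted b \<alpha> p f j)
     \<le> C2 b \<alpha> p q CARD('n) * real (L0 + 1) powr (real (CARD('n) - 1) * (1 - einv q)) * real b powr (-(\<alpha> - einv p) * real L0)"
proof -
  define \<delta> where "\<delta> = \<alpha> - einv p"
  define s1 where "s1 = CARD('n) - 1"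
  define W where "W j = wav_level_weighted b \<alpha> p f j" for j
  have W0: "W j \<ge> 0" for j unfolding W_def using W_nonneg[OF b] .
  have bpos: "real b > 0" using b by simp
  consider "q = \<infinity>" | "q = 1" | "q \<noteq> \<infinity>" "q \<noteq> 1" by blast
  then show ?thesis
  proof cases
    case 1
    have d: "\<delta> > 0" using a2 1 unfolding \<delta>_def by simp
    have "(\<Sum>j\<in>J. real b powr (-\<delta> * real (sum j UNIV)) * W j) \<le> (\<Sum>j\<in>J. real b powr (-\<delta> * real (sum j UNIV)))"
      by (intro sum_mono mult_left_le) (use W_le1_inf[OF 1 f nf] W0 in \<open>auto simp: W_def\<close>)
    also have "\<dots> \<le> Kc b \<delta> s1 * real (L0 + 1) ^ s1 * real b powr (-\<delta> * real L0)"
      unfolding s1_def by (rule GS[OF b d fin L0])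
    also have "real (L0 + 1) ^ s1 = real (L0 + 1) powr (real s1 * (1 - einv q))"
      using 1 by (simp add: einv_def powr_realpow)
    finally show ?thesis using 1 unfolding C2_def \<delta>_def s1_def W_def by simp
  next
    case 2
    have d: "\<delta> \<ge> 0" using a1 2 unfolding \<delta>_def by simp
    have "(\<Sum>j\<in>J. real b powr (-\<delta> * real (sum j UNIV)) * W j) \<le> (\<Sum>j\<in>J. real b powr (-\<delta> * real L0) * W j)"
    proof (intro sum_mono mult_right_mono)
      fix j assume "j \<in> J"
      then have "L0 \<le> sum j UNIV" using L0 by blast
      then have "real L0 \<le> real (sum j UNIV)" by (simp only: of_nat_le_iff)
      then have "-\<delta> * real (sum j UNIV) \<le> -\<delta> * real L0" using d by (simp add: mult_left_mono)
      then show "real b powr (-\<delta> * real (sum j UNIV)) \<le> real b powr (-\<delta> * real L0)"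
        using b by (intro powr_mono) auto
    qed (use W0 in auto)
    also have "\<dots> = real b powr (-\<delta> * real L0) * (\<Sum>j\<in>J. W j)" by (simp add: sum_distrib_left)
    also have "\<dots> \<le> real b powr (-\<delta> * real L0) * 1"
    proof (rule mult_left_mono)
      have "(\<Sum>j\<in>J. W j powr real_of_ereal q) \<le> 1" unfolding W_def
        by (rule Wq_sum_le[OF b q _ f nf fin]) (use 2 in simp)
      moreover have "(\<Sum>j\<in>J. W j powr real_of_ereal q) = (\<Sum>j\<in>J. W j)" using 2 W0 by simp
      ultimately show "(\<Sum>j\<in>J. W j) \<le> 1" by simp
    qed simp
    finally show ?thesis using 2 unfolding C2_def \<delta>_def W_def einv_def by simp
  next
    case 3
    define qq where "qq = real_of_ereal q"
    have qq1: "qq \<ge> 1" unfolding qq_def using q 3 real_ereal_ge1 by blast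
    have qgt: "q > 1" using q 3 by simp
    have qq: "qq > 1" using q 3 unfolding qq_def by (cases q) auto
    define q' where "q' = qq / (qq - 1)"
    have q'1: "q' > 1" unfolding q'_def using qq by simp
    have qq': "1/q' + 1/qq = 1" unfolding q'_def using qq by (simp add: field_simps)
    have iq: "1/q' = 1 - einv q" unfolding q'_def einv_def qq_def using 3 qq by (simp add: field_simps qq_def)
    have d: "\<delta> > 0" using a2 qgt unfolding \<delta>_def by simp
    have g: "\<delta> * q' > 0" using d q'1 by simp
    have "(\<Sum>j\<in>J. real b powr (-\<delta> * real (sum j UNIV)) * W j)
        \<le> (\<Sum>j\<in>J. (real b powr (-\<delta> * real (sum j UNIV))) powr q') powr (1/q') * (\<Sum>j\<in>J. W j powr qq) powr (1/qq)"
      by (rule holder_sum[OF fin q'1 qq qq']) (use W0 in auto)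
    also have "\<dots> \<le> (Kc b (\<delta> * q') s1 * real (L0 + 1) ^ s1 * real b powr (-(\<delta> * q') * real L0)) powr (1/q') * 1"
    proof (rule mult_mono)
      have e: "(\<Sum>j\<in>J. (real b powr (-\<delta> * real (sum j UNIV))) powr q') = (\<Sum>j\<in>J. real b powr (-(\<delta> * q') * real (sum j UNIV)))"
        by (simp add: powr_powr mult_ac)
      have "(\<Sum>j\<in>J. real b powr (-(\<delta> * q') * real (sum j UNIV))) \<le> Kc b (\<delta> * q') s1 * real (L0 + 1) ^ s1 * real b powr (-(\<delta> * q') * real L0)"
        unfolding s1_def by (rule GS[OF b g fin L0])
      then show "(\<Sum>j\<in>J. (real b powr (-\<delta> * real (sum j UNIV))) powr q') powr (1/q') \<le> (Kc b (\<delta> * q') s1 * real (L0 + 1) ^ s1 * real b powr (-(\<delta> * q') * real L0)) powr (1/q')"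
        unfolding e using q'1 by (intro powr_mono2) (auto intro: sum_nonneg)
      have "(\<Sum>j\<in>J. W j powr qq) \<le> 1" unfolding W_def qq_def
        by (rule Wq_sum_le[OF b q 3(1) f nf fin])
      moreover have "0 \<le> (\<Sum>j\<in>J. W j powr qq)" by (intro sum_nonneg) simp
      ultimately have "(\<Sum>j\<in>J. W j powr qq) powr (1/qq) \<le> 1 powr (1/qq)"
        using qq by (intro powr_mono2) auto
      then show "(\<Sum>j\<in>J. W j powr qq) powr (1/qq) \<le> 1" by simp
    qed (auto intro: sum_nonneg)
    also have "\<dots> = Kc b (\<delta> * q') s1 powr (1/q') * real (L0 + 1) powr (real s1 * (1/q')) * real b powr (-\<delta> * real L0)"
    proof -
      have K0: "Kc b (\<delta> * q') s1 \<ge> 0" by (rule Kc_nonneg[OF b g])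
      have "(real (L0 + 1) ^ s1) powr (1/q') = real (L0 + 1) powr (real s1 * (1/q'))"
        by (simp add: powr_realpow[symmetric] powr_powr)
      moreover have "(real b powr (-(\<delta> * q') * real L0)) powr (1/q') = real b powr (-\<delta> * real L0)"
        using q'1 by (simp add: powr_powr)
      ultimately show ?thesis using K0 by (simp add: powr_mult)
    qed
    finally have X: "(\<Sum>j\<in>J. real b powr (-\<delta> * real (sum j UNIV)) * W j) \<le>
        Kc b (\<delta> * q') s1 powr (1 - einv q) * real (L0 + 1) powr (real s1 * (1 - einv q)) * real b powr (-\<delta> * real L0)"
      by (simp only: iq)
    have dq: "\<delta> * q' = (\<alpha> - einv p) * (real_of_ereal q / (real_of_ereal q - 1))"
      unfolding \<delta>_def q'_def qq_def ..
    show ?thesis using X[unfolded dq] 3 unfolding C2_def W_def s1_def \<delta>_def by simp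
  qed
qed




lemma infsum_fin_sum:
  fixes f :: "'x \<Rightarrow> 'y \<Rightarrow> real"
  assumes "finite P" "\<And>x. x \<in> P \<Longrightarrow> f x summable_on A"
  shows "((\<lambda>y. \<Sum>x\<in>P. f x y) has_sum (\<Sum>x\<in>P. infsum (f x) A)) A"
  using assms
proof (induction P rule: finite_induct)
  case empty
  then show ?case by simp
next
  case (insert x P)
  have "((\<lambda>y. f x y + (\<Sum>x\<in>P. f x y)) has_sum (infsum (f x) A + (\<Sum>x\<in>P. infsum (f x) A))) A"
    using insert by (intro has_sum_add) auto
  then show ?case using insert by simp
qed

lemma haar_all_Sigma: "haar_all b = Sigma UNIV (haar_index b)"
  unfolding haar_all_def by auto

lemma group_bound:
  fixes g :: "('n::finite \<Rightarrow> nat) \<times> ('n \<Rightarrow> nat) \<times> ('n \<Rightarrow> nat) \<Rightarrow> real"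
  assumes fin: "finite F" and sub: "F \<subseteq> haar_all b" and g: "\<And>y. g y \<ge> 0"
  shows "sum g F \<le> (\<Sum>j\<in>fst ` F. \<Sum>ik\<in>haar_index b j. g (j, ik))"
proof -
  have "F \<subseteq> Sigma (fst ` F) (haar_index b)" using sub unfolding haar_all_Sigma by force
  then have "sum g F \<le> sum g (Sigma (fst ` F) (haar_index b))"
    by (intro sum_mono2) (use fin finite_haar_index g in auto)
  also have "\<dots> = (\<Sum>j\<in>fst ` F. \<Sum>ik\<in>haar_index b j. g (j, ik))"
  proof -
    have "\<forall>x\<in>fst ` F. finite (haar_index b x)" using finite_haar_index by blast
    then show ?thesis using sum.Sigma[of "fst ` F" "haar_index b" "\<lambda>j ik. g (j, ik)"] fin
      by (simp add: case_prod_beta')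
  qed
  finally show ?thesis .
qed

lemma index_j0:
  assumes "(i, k) \<in> haar_index b (\<lambda>_. 0)"
  shows "i = (\<lambda>_. 0) \<and> k = (\<lambda>_. 0)"
  using assms unfolding haar_index_def nabla_def Delta_def by (auto simp: fun_eq_iff)

lemma sum_j0: "sum (j :: 'n::finite \<Rightarrow> nat) UNIV = 0 \<longleftrightarrow> j = (\<lambda>_. 0)"
  by (auto simp: fun_eq_iff)

lemma haar_point_bound:
  fixes j :: "'n::finite \<Rightarrow> nat"
  assumes b: "b \<ge> 2" and ik: "(i, k) \<in> haar_index b j"
  shows "\<bar>haar b j i k x\<bar> \<le> real b powr (real (sum j UNIV) / 2) * real (cnt b {x} (\<lambda>l. j l - 1) k)"
  using haar_bound[OF b ik, of x] sum_if_cnt[of "{x}" b "\<lambda>l. j l - 1" k] by simp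

lemma haar_sum_bound:
  fixes j :: "'n::finite \<Rightarrow> nat"
  assumes b: "b \<ge> 2" and ik: "(i, k) \<in> haar_index b j" and fin: "finite P"
  shows "\<bar>\<Sum>x\<in>P. haar b j i k x\<bar> \<le> real b powr (real (sum j UNIV) / 2) * real (cnt b P (\<lambda>l. j l - 1) k)"
proof -
  have "\<bar>\<Sum>x\<in>P. haar b j i k x\<bar> \<le> (\<Sum>x\<in>P. \<bar>haar b j i k x\<bar>)" by (rule sum_abs)
  also have "\<dots> \<le> (\<Sum>x\<in>P. real b powr (real (sum j UNIV) / 2) * (if \<forall>l. \<lfloor>x$l * real b ^ (j l - 1)\<rfloor> = int (k l) then 1 else 0))"
    by (intro sum_mono haar_bound[OF b ik])
  also have "\<dots> = real b powr (real (sum j UNIV) / 2) * real (cnt b P (\<lambda>l. j l - 1) k)"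
    using sum_if_cnt[OF fin, of b "\<lambda>l. j l - 1" k] by (simp add: sum_distrib_left[symmetric])
  finally show ?thesis .
qed

lemma Wrel:
  assumes b: "b \<ge> 2"
  shows "real b powr (real (sum j UNIV) / 2) * level_norm b p f j
       = real b powr (-(\<alpha> - einv p) * real (sum j UNIV)) * wav_level_weighted b \<alpha> p f j"
proof -
  have "real b powr (-(\<alpha> - einv p) * real (sum j UNIV)) * real b powr ((\<alpha> - einv p + 1/2) * real (sum j UNIV))
      = real b powr (real (sum j UNIV) / 2)"
    by (simp add: powr_add[symmetric] algebra_simps)
  then show ?thesis unfolding wav_level_weighted_def by (simp add: mult.assoc[symmetric])
qed

lemma C2_nonneg:
  assumes b: "b \<ge> 2" and q: "q \<ge> 1" and a2: "q > 1 \<longrightarrow> \<alpha> > einv p"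
  shows "C2 b \<alpha> p q s \<ge> 0"
proof -
  have "q = \<infinity> \<Longrightarrow> Kc b (\<alpha> - einv p) (s - 1) \<ge> 0" using a2 b by (intro Kc_nonneg) auto
  then show ?thesis unfolding C2_def by auto
qed

lemma point_summable:
  fixes f :: "real^'n::finite \<Rightarrow> real" and x :: "real^'n"
  assumes b: "b \<ge> 2" and p: "p \<ge> 1" and q: "q \<ge> 1"
    and a1: "q = 1 \<longrightarrow> \<alpha> \<ge> einv p" and a2: "q > 1 \<longrightarrow> \<alpha> > einv p"
    and f: "f \<in> wav_space b \<alpha> p q" and nf: "wav_norm b \<alpha> p q f \<le> 1"
  shows "(\<lambda>(j, i, k). haar_coeff b f j i k * haar b j i k x) summable_on haar_all b"
proof -
  define G where "G = (\<lambda>(j, i, k). haar_coeff b f j i k * haar b j i k x)"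
  define Bx where "Bx = real b ^ CARD('n) * C2 b \<alpha> p q CARD('n)"
  have "sum (\<lambda>y. norm (G y)) F \<le> Bx" if F: "finite F" "F \<subseteq> haar_all b" for F
  proof -
    have "sum (\<lambda>y. norm (G y)) F \<le> (\<Sum>j\<in>fst ` F. \<Sum>ik\<in>haar_index b j. norm (G (j, ik)))"
      by (rule group_bound[OF F]) simp
    also have "\<dots> \<le> (\<Sum>j\<in>fst ` F. real b powr (real (sum j UNIV) / 2) * (level_norm b p f j * real b ^ CARD('n)))"
    proof (intro sum_mono)
      fix j assume "j \<in> fst ` F"
      have "(\<Sum>ik\<in>haar_index b j. norm (G (j, ik))) \<le>
          (\<Sum>ik\<in>haar_index b j. \<bar>haar_coeff b f j (fst ik) (snd ik)\<bar> * (real b powr (real (sum j UNIV) / 2) * real (cnt b {x} (\<lambda>l. j l - 1) (snd ik))))"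
      proof (intro sum_mono)
        fix ik assume ik: "ik \<in> haar_index b j"
        obtain i k where ikd: "ik = (i, k)" by fastforce
        have "\<bar>haar b j i k x\<bar> \<le> real b powr (real (sum j UNIV) / 2) * real (cnt b {x} (\<lambda>l. j l - 1) k)"
          using haar_point_bound[OF b ik[unfolded ikd]] .
        then show "norm (G (j, ik)) \<le> \<bar>haar_coeff b f j (fst ik) (snd ik)\<bar> * (real b powr (real (sum j UNIV) / 2) * real (cnt b {x} (\<lambda>l. j l - 1) (snd ik)))"
          unfolding G_def ikd by (simp add: abs_mult mult_left_mono)
      qed
      also have "\<dots> \<le> real b powr (real (sum j UNIV) / 2) * (level_norm b p f j * real b ^ CARD('n))"
        by (rule LB_point[OF b p])
      finally show "(\<Sum>ik\<in>haar_index b j. norm (G (j, ik))) \<le> real b powr (real (sum j UNIV) / 2) * (level_norm b p f j * real b ^ CARD('n))" .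
    qed
    also have "\<dots> = real b ^ CARD('n) * (\<Sum>j\<in>fst ` F. real b powr (-(\<alpha> - einv p) * real (sum j UNIV)) * wav_level_weighted b \<alpha> p f j)"
    proof -
      have "(\<Sum>j\<in>fst ` F. real b powr (real (sum j UNIV) / 2) * (level_norm b p f j * real b ^ CARD('n)))
          = (\<Sum>j\<in>fst ` F. real b ^ CARD('n) * (real b powr (real (sum j UNIV) / 2) * level_norm b p f j))"
        by (intro sum.cong refl) (simp only: mult_ac)
      also have "\<dots> = (\<Sum>j\<in>fst ` F. real b ^ CARD('n) * (real b powr (-(\<alpha> - einv p) * real (sum j UNIV)) * wav_level_weighted b \<alpha> p f j))"
        by (intro sum.cong refl) (simp only: Wrel[OF b, where \<alpha>=\<alpha>])
      finally show ?thesis by (simp only: sum_distrib_left)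
    qed
    also have "\<dots> \<le> real b ^ CARD('n) * (C2 b \<alpha> p q CARD('n) * real (0 + 1) powr (real (CARD('n) - 1) * (1 - einv q)) * real b powr (-(\<alpha> - einv p) * real 0))"
      by (intro mult_left_mono outer[OF b p q a1 a2 f nf]) (use F in auto)
    also have "\<dots> = Bx" unfolding Bx_def by simp
    finally show ?thesis .
  qed
  then have "Infinite_Sum.abs_summable_on G (haar_all b)"
    unfolding abs_summable_iff_bdd_above by (intro bdd_aboveI) auto
  then show ?thesis unfolding G_def by (rule abs_summable_summable)
qed




lemma haar0_on_P:
  assumes "\<forall>l. 0 \<le> x$l \<and> x$l < 1"
  shows "haar b (\<lambda>_. 0) (\<lambda>_. 0) (\<lambda>_. 0) x = 1"
  using assms unfolding haar0_eq by (simp add: indicator_def)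

lemma error_bound:
  fixes f :: "real^'n::finite \<Rightarrow> real" and P :: "(real^'n) set"
  assumes b: "b \<ge> 2" and p: "p \<ge> 1" and q: "q \<ge> 1"
    and a1: "q = 1 \<longrightarrow> \<alpha> \<ge> einv p" and a2: "q > 1 \<longrightarrow> \<alpha> > einv p"
    and f: "f \<in> wav_space b \<alpha> p q" and nf: "wav_norm b \<alpha> p q f \<le> 1"
    and net: "is_net b t m P"
  shows "\<bar>(LINT x|lebesgue_on unit_cube. f x) - qmc b m P (wav_series b f)\<bar>
    \<le> real b ^ (t + 2 * CARD('n)) * real b powr (- real m * einv p) *
       (C2 b \<alpha> p q CARD('n) * real (m - t + 1 + 1) powr (real (CARD('n) - 1) * (1 - einv q)) *
        real b powr (-(\<alpha> - einv p) * real (m - t + 1)))"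
proof -
  define Y where "Y = (haar_all b :: (('n \<Rightarrow> nat) \<times> ('n \<Rightarrow> nat) \<times> ('n \<Rightarrow> nat)) set)"
  define G where "G x = (\<lambda>(j, i, k). haar_coeff b f j i k * haar b j i k x)" for x :: "real^'n"
  define D where "D y = real b powr (- real m) * (\<Sum>x\<in>P. G x y)" for y
  define y0 where "y0 = ((\<lambda>_. 0) :: 'n \<Rightarrow> nat, (\<lambda>_. 0) :: 'n \<Rightarrow> nat, (\<lambda>_. 0) :: 'n \<Rightarrow> nat)"
  define Y' where "Y' = Y - {y0}"
  define c0 where "c0 = haar_coeff b f (\<lambda>_. 0) (\<lambda>_. 0) (\<lambda>_. 0)"
  define ip where "ip = einv p"
  define \<delta> where "\<delta> = \<alpha> - einv p"
  define s where "s = CARD('n)"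
  have fin: "finite P" using net unfolding is_net_def by auto
  have cardP: "card P = b ^ m" by (rule net_card[OF net b])
  have tm: "t \<le> m" using net unfolding is_net_def by auto
  have Punit: "\<forall>l. 0 \<le> x$l \<and> x$l < 1" if "x \<in> P" for x using net that unfolding is_net_def by blast
  have bpos: "real b > 0" using b by simp
  have sumx: "G x summable_on Y" for x
    unfolding G_def Y_def by (rule point_summable[OF b p q a1 a2 f nf])
  have hs: "((\<lambda>y. \<Sum>x\<in>P. G x y) has_sum (\<Sum>x\<in>P. infsum (G x) Y)) Y"
    by (rule infsum_fin_sum[OF fin sumx])
  have qmc_eq: "qmc b m P (wav_series b f) = real b powr (- real m) * (\<Sum>x\<in>P. infsum (G x) Y)"
    unfolding qmc_def wav_series_def G_def Y_def ..
  have hsD: "(D has_sum qmc b m P (wav_series b f)) Y"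
    unfolding qmc_eq D_def by (rule has_sum_cmult_right[OF hs])
  have y0Y: "y0 \<in> Y" unfolding Y_def y0_def haar_all_def using zero_in_index[of b] b by auto
  have Ysplit: "Y = insert y0 Y'" unfolding Y'_def using y0Y by auto
  have sumD: "D summable_on Y" using hsD by (rule has_sum_imp_summable)
  have sumD': "D summable_on Y'" by (rule summable_on_subset[OF sumD]) (auto simp: Y'_def)
  have qmc2: "qmc b m P (wav_series b f) = D y0 + infsum D Y'"
  proof -
    have "qmc b m P (wav_series b f) = infsum D Y" using hsD by (simp add: infsumI)
    also have "\<dots> = D y0 + infsum D Y'" unfolding Ysplit by (rule infsum_insert[OF sumD']) (simp add: Y'_def)
    finally show ?thesis .
  qed
  have Dy0: "D y0 = c0"
  proof -
    have "(\<Sum>x\<in>P. G x y0) = (\<Sum>x\<in>P. c0)"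
      unfolding G_def y0_def c0_def using haar0_on_P[OF Punit] by (intro sum.cong refl) simp
    also have "\<dots> = c0 * real b ^ m" using cardP by simp
    finally have "D y0 = real b powr (- real m) * (c0 * real b ^ m)" unfolding D_def by simp
    also have "\<dots> = c0" using bpos by (simp add: powr_minus powr_realpow field_simps)
    finally show ?thesis .
  qed
  have intf: "integrable (lebesgue_on unit_cube) f" using f unfolding wav_space_def by simp
  have c0int: "c0 = (LINT x|lebesgue_on unit_cube. f x)" unfolding c0_def by (rule coeff0[OF intf])
  have err: "(LINT x|lebesgue_on unit_cube. f x) - qmc b m P (wav_series b f) = - infsum D Y'"
    using qmc2 Dy0 c0int by simp
  define B where "B = real b ^ (t + 2 * s) * real b powr (- real m * ip) *
       (C2 b \<alpha> p q s * real (m - t + 1 + 1) powr (real (s - 1) * (1 - einv q)) *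
        real b powr (-\<delta> * real (m - t + 1)))"
  have absD: "Infinite_Sum.abs_summable_on D Y'" using sumD' summable_on_iff_abs_summable_on_real by blast
  have finsum: "sum (\<lambda>y. \<bar>D y\<bar>) F \<le> B" if F: "finite F" "F \<subseteq> Y'" for F
  proof -
    have FY: "F \<subseteq> haar_all b" using F unfolding Y'_def Y_def by auto
    have "sum (\<lambda>y. \<bar>D y\<bar>) F \<le> (\<Sum>j\<in>fst ` F. \<Sum>ik\<in>haar_index b j. \<bar>D (j, ik)\<bar>)"
      by (rule group_bound[OF F(1) FY]) simp
    also have "\<dots> = (\<Sum>j\<in>{j\<in>fst ` F. m - t < sum j UNIV}. \<Sum>ik\<in>haar_index b j. \<bar>D (j, ik)\<bar>)"
    proof -
      have "(\<Sum>j\<in>fst ` F. \<Sum>ik\<in>haar_index b j. \<bar>D (j, ik)\<bar>) =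
          (\<Sum>j\<in>fst ` F. if m - t < sum j UNIV then (\<Sum>ik\<in>haar_index b j. \<bar>D (j, ik)\<bar>) else 0)"
      proof (intro sum.cong refl)
        fix j assume jF: "j \<in> fst ` F"
        show "(\<Sum>ik\<in>haar_index b j. \<bar>D (j, ik)\<bar>) = (if m - t < sum j UNIV then (\<Sum>ik\<in>haar_index b j. \<bar>D (j, ik)\<bar>) else 0)"
        proof (cases "m - t < sum j UNIV")
          case False
          have j1: "1 \<le> sum j UNIV"
          proof (rule ccontr)
            assume "\<not> 1 \<le> sum j UNIV"
            then have "sum j UNIV = 0" by linarith
            then have j0: "j = (\<lambda>_. 0)" by (simp only: sum_j0)
            obtain ik where ik: "(j, ik) \<in> F" using jF by force
            then have "ik \<in> haar_index b j" using FY unfolding haar_all_Sigma by auto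
            then have "ik = ((\<lambda>_. 0), (\<lambda>_. 0))" using index_j0[of "fst ik" "snd ik" b] j0 by (simp add: prod_eq_iff)
            then have "(j, ik) = y0" unfolding y0_def j0 by simp
            then show False using ik F unfolding Y'_def by auto
          qed
          have "\<bar>D (j, ik)\<bar> = 0" if ik: "ik \<in> haar_index b j" for ik
          proof -
            obtain i k where ikd: "ik = (i, k)" by fastforce
            have "(\<Sum>x\<in>P. haar b j i k x) = 0"
              by (rule haar_sum_zero[OF net b ik[unfolded ikd] j1]) (use False in simp)
            then show ?thesis unfolding D_def G_def ikd by (simp add: sum_distrib_left[symmetric])
          qed
          then show ?thesis using False by simp
        qed simp
      qed
      also have "\<dots> = (\<Sum>j\<in>{j\<in>fst ` F. m - t < sum j UNIV}. \<Sum>ik\<in>haar_index b j. \<bar>D (j, ik)\<bar>)"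
        by (rule sum.inter_filter[symmetric]) (use F in simp)
      finally show ?thesis .
    qed
    also have "\<dots> \<le> (\<Sum>j\<in>{j\<in>fst ` F. m - t < sum j UNIV}. real b ^ (t + 2 * s) * real b powr (- real m * ip) *
           (real b powr (-\<delta> * real (sum j UNIV)) * wav_level_weighted b \<alpha> p f j))"
    proof (intro sum_mono)
      fix j assume "j \<in> {j\<in>fst ` F. m - t < sum j UNIV}"
      then have jm: "m - t < sum j UNIV" by simp
      have "(\<Sum>ik\<in>haar_index b j. \<bar>D (j, ik)\<bar>) \<le> (\<Sum>ik\<in>haar_index b j. real b powr (- real m) *
          (\<bar>haar_coeff b f j (fst ik) (snd ik)\<bar> * (real b powr (real (sum j UNIV) / 2) * real (cnt b P (\<lambda>l. j l - 1) (snd ik)))))"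
      proof (intro sum_mono)
        fix ik assume ik: "ik \<in> haar_index b j"
        obtain i k where ikd: "ik = (i, k)" by fastforce
        have "D (j, ik) = real b powr (- real m) * (haar_coeff b f j i k * (\<Sum>x\<in>P. haar b j i k x))"
          unfolding D_def G_def ikd by (simp add: sum_distrib_left)
        then have "\<bar>D (j, ik)\<bar> = real b powr (- real m) * (\<bar>haar_coeff b f j i k\<bar> * \<bar>\<Sum>x\<in>P. haar b j i k x\<bar>)"
          by (simp add: abs_mult)
        also have "\<dots> \<le> real b powr (- real m) * (\<bar>haar_coeff b f j i k\<bar> * (real b powr (real (sum j UNIV) / 2) * real (cnt b P (\<lambda>l. j l - 1) k)))"
          by (intro mult_left_mono haar_sum_bound[OF b ik[unfolded ikd] fin]) auto
        finally show "\<bar>D (j, ik)\<bar> \<le> real b powr (- real m) *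
          (\<bar>haar_coeff b f j (fst ik) (snd ik)\<bar> * (real b powr (real (sum j UNIV) / 2) * real (cnt b P (\<lambda>l. j l - 1) (snd ik))))"
          unfolding ikd by simp
      qed
      also have "\<dots> = real b powr (- real m) * (\<Sum>ik\<in>haar_index b j.
          \<bar>haar_coeff b f j (fst ik) (snd ik)\<bar> * (real b powr (real (sum j UNIV) / 2) * real (cnt b P (\<lambda>l. j l - 1) (snd ik))))"
        by (simp only: sum_distrib_left)
      also have "\<dots> \<le> real b powr (- real m) * (real b powr (real (sum j UNIV) / 2) * (level_norm b p f j * (real b ^ (t + 2 * CARD('n)) * real b powr (real m * (1 - einv p)))))"
        by (intro mult_left_mono LB_main[OF net b p jm]) simp
      also have "\<dots> = (real b powr (- real m) * real b powr (real m * (1 - einv p))) * real b ^ (t + 2 * CARD('n)) * (real b powr (real (sum j UNIV) / 2) * level_norm b p f j)"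
        by (simp only: mult_ac)
      also have "real b powr (- real m) * real b powr (real m * (1 - einv p)) = real b powr (- real m * ip)"
        unfolding ip_def by (simp add: powr_add[symmetric] algebra_simps)
      also have "real b powr (real (sum j UNIV) / 2) * level_norm b p f j = real b powr (-\<delta> * real (sum j UNIV)) * wav_level_weighted b \<alpha> p f j"
        unfolding \<delta>_def by (rule Wrel[OF b])
      finally show "(\<Sum>ik\<in>haar_index b j. \<bar>D (j, ik)\<bar>) \<le> real b ^ (t + 2 * s) * real b powr (- real m * ip) *
           (real b powr (-\<delta> * real (sum j UNIV)) * wav_level_weighted b \<alpha> p f j)"
        unfolding s_def by (simp only: mult_ac)
    qed
    also have "\<dots> = real b ^ (t + 2 * s) * real b powr (- real m * ip) *
        (\<Sum>j\<in>{j\<in>fst ` F. m - t < sum j UNIV}. real b powr (-\<delta> * real (sum j UNIV)) * wav_level_weighted b \<alpha> p f j)"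
      by (simp only: sum_distrib_left)
    also have "\<dots> \<le> B" unfolding B_def \<delta>_def s_def
      by (intro mult_left_mono outer[OF b p q a1 a2 f nf]) (use F in auto)
    finally show ?thesis .
  qed
  have "\<bar>infsum D Y'\<bar> \<le> infsum (\<lambda>y. \<bar>D y\<bar>) Y'"
    using norm_infsum_bound[OF absD] by simp
  also have "\<dots> \<le> B"
  proof (rule infsum_le_finite_sums)
    show "(\<lambda>y. \<bar>D y\<bar>) summable_on Y'" using absD by simp
    show "\<And>F. finite F \<Longrightarrow> F \<subseteq> Y' \<Longrightarrow> sum (\<lambda>y. \<bar>D y\<bar>) F \<le> B" by (rule finsum)
  qed
  finally show ?thesis unfolding err B_def ip_def \<delta>_def s_def by simp
qed




theorem theorem2:
  fixes b t :: nat and \<alpha> :: real and p q :: ereal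
  assumes "b \<ge> 2" and "1 \<le> p" and "1 \<le> q"
    and "q = 1 \<longrightarrow> \<alpha> \<ge> einv p"
    and "q > 1 \<longrightarrow> \<alpha> > einv p"
  shows "\<exists>C. \<forall>m (P :: (real^'n::finite) set). m \<ge> 1 \<longrightarrow> is_net b t m P \<longrightarrow>
           e_wor_wav b \<alpha> p q m P \<le>
             ereal (C * real (card P) powr (- \<alpha>) *
                    ln (real (card P)) powr (real (CARD('n) - 1) * (1 - einv q)))"
proof -
  note b = assms(1) and p = assms(2) and q = assms(3) and a1 = assms(4) and a2 = assms(5)
  define s where "s = CARD('n)"
  define e where "e = real (s - 1) * (1 - einv q)"
  define \<delta> where "\<delta> = \<alpha> - einv p"
  define ip where "ip = einv p"
  define C where "C = real b ^ (t + 2 * s) * C2 b \<alpha> p q s * real b powr (\<delta> * real t) * (3 / ln (real b)) powr e"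
  have bpos: "real b > 0" and b1: "real b > 1" using b by auto
  have lnb: "ln (real b) > 0" using b1 by simp
  have d0: "\<delta> \<ge> 0"
  proof (cases "q = 1")
    case True then show ?thesis using a1 unfolding \<delta>_def by simp
  next
    case False then have "q > 1" using q by simp
    then show ?thesis using a2 unfolding \<delta>_def by simp
  qed
  have e0: "e \<ge> 0" unfolding e_def using einv_range[OF q] by simp
  have C2nn: "C2 b \<alpha> p q s \<ge> 0" by (rule C2_nonneg[OF b q a2])
  show ?thesis
  proof (intro exI allI impI)
    fix m :: nat and P :: "(real^'n) set"
    assume m1: "m \<ge> 1" and net: "is_net b t m P"
    have cardP: "card P = b ^ m" by (rule net_card[OF net b])
    have tm: "t \<le> m" using net unfolding is_net_def by auto
    define N where "N = real (card P)"
    have N: "N = real b ^ m" unfolding N_def cardP by simp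
    have lnN: "ln N = real m * ln (real b)" unfolding N using bpos by (simp add: ln_realpow)
    define Bd where "Bd = C * N powr (- \<alpha>) * ln N powr e"
    have main: "\<bar>(LINT x|lebesgue_on unit_cube. f x) - qmc b m P (wav_series b f)\<bar> \<le> Bd"
      if f: "f \<in> wav_space b \<alpha> p q" and nf: "wav_norm b \<alpha> p q f \<le> 1" for f
    proof -
      have "\<bar>(LINT x|lebesgue_on unit_cube. f x) - qmc b m P (wav_series b f)\<bar>
        \<le> real b ^ (t + 2 * s) * real b powr (- real m * ip) *
           (C2 b \<alpha> p q s * real (m - t + 1 + 1) powr e * real b powr (-\<delta> * real (m - t + 1)))"
        using error_bound[OF b p q a1 a2 f nf net] unfolding s_def e_def ip_def \<delta>_def .
      also have "\<dots> \<le> real b ^ (t + 2 * s) * real b powr (- real m * ip) *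
           (C2 b \<alpha> p q s * ((3 / ln (real b)) powr e * ln N powr e) * (real b powr (-\<delta> * real m) * real b powr (\<delta> * real t)))"
      proof (intro mult_left_mono mult_mono)
        have "real (m - t + 1 + 1) \<le> 3 * real m" using m1 tm by linarith
        also have "3 * real m = (3 / ln (real b)) * ln N" unfolding lnN using lnb by simp
        finally have "real (m - t + 1 + 1) powr e \<le> ((3 / ln (real b)) * ln N) powr e"
          using e0 by (intro powr_mono2) auto
        moreover have "((3 / ln (real b)) * ln N) powr e = (3 / ln (real b)) powr e * ln N powr e"
          by (rule powr_mult)
        ultimately show "real (m - t + 1 + 1) powr e \<le> (3 / ln (real b)) powr e * ln N powr e"
          by simp
        have "-\<delta> * real (m - t + 1) \<le> -\<delta> * real m + \<delta> * real t"
          using d0 tm by (simp add: of_nat_diff algebra_simps)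
        then have "real b powr (-\<delta> * real (m - t + 1)) \<le> real b powr (-\<delta> * real m + \<delta> * real t)"
          using b1 by (intro powr_mono) auto
        moreover have "real b powr (-\<delta> * real m + \<delta> * real t) = real b powr (-\<delta> * real m) * real b powr (\<delta> * real t)"
          by (rule powr_add)
        ultimately show "real b powr (-\<delta> * real (m - t + 1)) \<le> real b powr (-\<delta> * real m) * real b powr (\<delta> * real t)"
          by simp
      qed (use C2nn in auto)
      also have "\<dots> = C * (real b powr (- real m * ip) * real b powr (-\<delta> * real m)) * ln N powr e"
        unfolding C_def by (simp only: mult_ac)
      also have "real b powr (- real m * ip) * real b powr (-\<delta> * real m) = N powr (- \<alpha>)"
      proof -
        have "real b powr (- real m * ip) * real b powr (-\<delta> * real m) = real b powr (real m * (- \<alpha>))"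
          unfolding \<delta>_def ip_def by (simp add: powr_add[symmetric] algebra_simps)
        also have "\<dots> = (real b powr real m) powr (- \<alpha>)" by (simp add: powr_powr)
        also have "real b powr real m = N" unfolding N using bpos by (simp add: powr_realpow)
        finally show ?thesis .
      qed
      finally show ?thesis unfolding Bd_def by (simp only: mult_ac)
    qed
    have "e_wor_wav b \<alpha> p q m P \<le> ereal Bd"
      unfolding e_wor_wav_def by (rule SUP_least) (use main in auto)
    then show "e_wor_wav b \<alpha> p q m P \<le> ereal (C * real (card P) powr (- \<alpha>) * ln (real (card P)) powr (real (CARD('n) - 1) * (1 - einv q)))"
      unfolding Bd_def N_def e_def s_def C_def by simp
  qed
qed



end
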